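(* Let $G$ be a finite simple undirected graph on $N$ vertices with Laplacian $L$, and fix $t\ge 0$. Among all classical (diagonal) states $\rho_{\mathrm C}=\sum_{k=1}^N z_k\,|k\rangle\langle k|$ (with $z_k\ge 0$, $\sum_k z_k=1$), the minimum of $\mathcal F\big(\mathcal E_{\mathrm C}(\rho_{\mathrm C}),\mathcal E_{\mathrm Q}(\rho_{\mathrm C})\big)$ is attained at a localized state $\rho_j=|j\rangle\langle j|$ for some vertex $j$; that is, $$\min_{\rho_{\mathrm C}}\mathcal F\big(\mathcal E_{\mathrm C}(\rho_{\mathrm C}),\mathcal E_{\mathrm Q}(\rho_{\mathrm C})\big)=\min_{j}\mathcal F\big(\mathcal E_{\mathrm C}(\rho_j),\mathcal E_{\mathrm Q}(\rho_j)\big).$$ Consequently $D_{QC}(t)=\max_j\big(1-\mathcal F(\mathcal E_{\mathrm C}(\rho_j),\mathcal E_{\mathrm Q}(\rho_j))\big)$.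
   Context: $G$ is a finite simple undirected graph with vertex set $\{1,\dots,N\}$; $\{|k\rangle\}_{k=1}^N$ is an orthonormal basis of $\mathbb C^N$ (localized states). The Laplacian $L$ is the real symmetric $N\times N$ matrix with $L_{jk}=1$ if $j\neq k$ are adjacent, $L_{jk}=0$ if $j\ne k$ are not adjacent, and $L_{jj}=-d_j$ where $d_j$ is the degree of vertex $j$. For $t\ge0$ define the classical map on density matrices $\mathcal E_{\mathrm C}(\rho)=\sum_{k}\big(\sum_j p_{kj}(t)\rho_{jj}\big)|k\rangle\langle k|$ with $p_{kj}(t)=\langle k|e^{Lt}|j\rangle$, and the quantum map $\mathcal E_{\mathrm Q}(\rho)=e^{iLt}\rho\, e^{-iLt}$. The fidelity is $\mathcal F(\rho_1,\rho_2)=\big[\mathrm{Tr}\sqrt{\sqrt{\rho_1}\rho_2\sqrt{\rho_1}}\big]^2$. The QC-distance is $D_{QC}(t)=1-\min_{\rho_{\mathrm C}}\mathcal F(\mathcal E_{\mathrm C}(\rho_{\mathrm C}),\mathcal E_{\mathrm Q}(\rho_{\mathrm C}))$, the minimum over all diagonal density matrices $\rho_{\mathrm C}$ in the basis $\{|k\rangle\}$. *)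

theory Defs
  imports "HOL-Analysis.Analysis"
begin

text \<open>Vertices are the elements of a finite type 'n (so N = CARD('n) \<ge> 1).
  Matrices are complex ^'n^'n, indexed by the vertices (localized basis |k>).\<close>

definition simple_graph :: "('n::finite \<Rightarrow> 'n \<Rightarrow> bool) \<Rightarrow> bool" where
  "simple_graph E \<longleftrightarrow> (\<forall>i j. E i j \<longrightarrow> E j i) \<and> (\<forall>i. \<not> E i i)"

definition degree :: "('n::finite \<Rightarrow> 'n \<Rightarrow> bool) \<Rightarrow> 'n \<Rightarrow> nat" where
  "degree E j = card {k. E j k}"

text \<open>Laplacian with the paper's sign convention: L_jk = 1 if adjacent, L_jj = -d_j.\<close>
definition laplacian :: "('n::finite \<Rightarrow> 'n \<Rightarrow> bool) \<Rightarrow> real^'n^'n" where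
  "laplacian E = (\<chi> j k. if j = k then - real (degree E j) else if E j k then 1 else 0)"

primrec matpow :: "'a::comm_ring_1^'n::finite^'n \<Rightarrow> nat \<Rightarrow> 'a^'n^'n" where
  "matpow A 0 = mat 1"
| "matpow A (Suc k) = A ** matpow A k"

definition mexp :: "complex^'n::finite^'n \<Rightarrow> complex^'n^'n" where
  "mexp A = (\<chi> i j. (\<Sum>k. (matpow A k) $ i $ j / of_nat (fact k)))"

definition cmat_of_real :: "real^'n::finite^'n \<Rightarrow> complex^'n^'n" where
  "cmat_of_real A = (\<chi> i j. complex_of_real (A $ i $ j))"

definition adjoint :: "complex^'n::finite^'n \<Rightarrow> complex^'n^'n" where
  "adjoint A = (\<chi> i j. cnj (A $ j $ i))"

definition mtrace :: "complex^'n::finite^'n \<Rightarrow> complex" where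
  "mtrace A = (\<Sum>i\<in>UNIV. A $ i $ i)"

text \<open>Positive semidefinite: x* A x is real and nonnegative for every x (this forces Hermitian).\<close>
definition psd :: "complex^'n::finite^'n \<Rightarrow> bool" where
  "psd A \<longleftrightarrow> (\<forall>x::complex^'n. let q = (\<Sum>i\<in>UNIV. \<Sum>j\<in>UNIV. cnj (x $ i) * A $ i $ j * x $ j)
                                 in Im q = 0 \<and> Re q \<ge> 0)"

definition msqrt :: "complex^'n::finite^'n \<Rightarrow> complex^'n^'n" where
  "msqrt A = (THE B. psd B \<and> B ** B = A)"

text \<open>Fidelity F(r1,r2) = [Tr sqrt(sqrt r1 r2 sqrt r1)]^2 (the trace is real for density matrices).\<close>
definition fidelity :: "complex^'n::finite^'n \<Rightarrow> complex^'n^'n \<Rightarrow> real" where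
  "fidelity r1 r2 = (Re (mtrace (msqrt (msqrt r1 ** r2 ** msqrt r1)))) ^ 2"

definition diag_mat :: "('n::finite \<Rightarrow> complex) \<Rightarrow> complex^'n^'n" where
  "diag_mat z = (\<chi> i j. if i = j then z i else 0)"

definition classical_states :: "(complex^'n::finite^'n) set" where
  "classical_states = {diag_mat (\<lambda>k. complex_of_real (z k)) | z. (\<forall>k. z k \<ge> 0) \<and> (\<Sum>k\<in>UNIV. z k) = 1}"

definition loc_state :: "'n::finite \<Rightarrow> complex^'n^'n" where
  "loc_state j = diag_mat (\<lambda>k. if k = j then 1 else 0)"

definition ptrans :: "('n::finite \<Rightarrow> 'n \<Rightarrow> bool) \<Rightarrow> real \<Rightarrow> 'n \<Rightarrow> 'n \<Rightarrow> complex" where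
  "ptrans E t k j = mexp (t *\<^sub>R cmat_of_real (laplacian E)) $ k $ j"

definition classical_map :: "('n::finite \<Rightarrow> 'n \<Rightarrow> bool) \<Rightarrow> real \<Rightarrow> complex^'n^'n \<Rightarrow> complex^'n^'n" where
  "classical_map E t \<rho> = diag_mat (\<lambda>k. \<Sum>j\<in>UNIV. ptrans E t k j * \<rho> $ j $ j)"

definition quantum_map :: "('n::finite \<Rightarrow> 'n \<Rightarrow> bool) \<Rightarrow> real \<Rightarrow> complex^'n^'n \<Rightarrow> complex^'n^'n" where
  "quantum_map E t \<rho> =
     (let U = mexp (\<chi> a b. \<i> * complex_of_real t * laplacian E $ a $ b) in U ** \<rho> ** adjoint U)"

definition D_QC :: "('n::finite \<Rightarrow> 'n \<Rightarrow> bool) \<Rightarrow> real \<Rightarrow> real" where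
  "D_QC E t = 1 - (INF \<rho>\<in>(classical_states :: (complex^'n^'n) set).
                     fidelity (classical_map E t \<rho>) (quantum_map E t \<rho>))"

end

theory Submission
  imports Defs "HOL-Computational_Algebra.Formal_Power_Series"
begin

definition sf :: "complex^'n::finite^'n \<Rightarrow> complex^'n \<Rightarrow> complex^'n \<Rightarrow> complex" where
  "sf A x y = (\<Sum>i\<in>UNIV. \<Sum>j\<in>UNIV. cnj (x $ i) * A $ i $ j * y $ j)"

definition n2 :: "complex^'n::finite \<Rightarrow> real" where "n2 x = (\<Sum>i\<in>UNIV. (cmod (x$i))^2)"

definition herm :: "complex^'n::finite^'n \<Rightarrow> bool" where
  "herm A \<longleftrightarrow> (\<forall>i j. A$i$j = cnj (A$j$i))"

lemma psd_def2: "psd A \<longleftrightarrow> (\<forall>x. Im (sf A x x) = 0 \<and> Re (sf A x x) \<ge> 0)"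
  by (simp add: psd_def sf_def Let_def)

lemma sf_add1: "sf A (x + y) z = sf A x z + sf A y z"
  by (simp add: sf_def sum.distrib algebra_simps)
lemma sf_add2: "sf A x (y + z) = sf A x y + sf A x z"
  by (simp add: sf_def sum.distrib algebra_simps)
lemma sf_scale1: "sf A (c *s x) y = cnj c * sf A x y"
  by (simp add: sf_def sum_distrib_left algebra_simps)
lemma sf_scale2: "sf A x (c *s y) = c * sf A x y"
  by (simp add: sf_def sum_distrib_left algebra_simps)
lemma sf_axis: "sf A (axis i a) (axis j b) = cnj a * A$i$j * b"
  by (simp add: sf_def axis_def if_distrib[where f=cnj] if_distrib[where f="\<lambda>u. u * _"] if_distrib[where f="\<lambda>u. _ * u"] cong: if_cong)



lemma psd_herm: assumes "psd A" shows "herm A"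
  unfolding herm_def
proof (intro allI)
  fix i j
  have P: "\<And>x. Im (sf A x x) = 0" using assms by (simp add: psd_def2)
  have ex: "sf A (axis i 1 + axis j c) (axis i 1 + axis j c) = A$i$i + cnj c * A$j$j * c + c * A$i$j + cnj c * A$j$i" for c
    by (simp add: sf_add1 sf_add2 sf_axis)
  have ii: "Im (A$i$i) = 0" using P[of "axis i 1"] by (simp add: sf_axis)
  have jj: "Im (A$j$j) = 0" using P[of "axis j 1"] by (simp add: sf_axis)
  have jj2: "Im (cnj \<i> * A$j$j * \<i>) = 0" using jj by simp
  have 1: "Im (A$i$j) + Im (A$j$i) = 0" using P[of "axis i 1 + axis j 1"] ii jj unfolding ex by simp
  have 2: "Re (A$i$j) - Re (A$j$i) = 0" using P[of "axis i 1 + axis j \<i>"] ii jj2 unfolding ex by simp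
  show "A$i$j = cnj (A$j$i)" using 1 2 by (simp add: complex_eq_iff)
qed

lemma herm_sf_cnj: assumes "herm A" shows "cnj (sf A x y) = sf A y x"
proof -
  have h: "\<And>i j. cnj (A$i$j) = A$j$i" using assms unfolding herm_def by (metis complex_cnj_cnj)
  have "cnj (sf A x y) = (\<Sum>i\<in>UNIV. \<Sum>j\<in>UNIV. x $ i * A $ j $ i * cnj (y $ j))"
    by (simp add: sf_def h)
  also have "\<dots> = sf A y x" unfolding sf_def by (subst sum.swap) (simp add: algebra_simps)
  finally show ?thesis .
qed

lemma herm_qf_real: "herm A \<Longrightarrow> Im (sf A x x) = 0"
  using herm_sf_cnj[of A x x] by (metis Reals_cnj_iff complex_is_Real_iff)


lemma real_cs_aux:
  fixes p q B :: real
  assumes "\<And>s. 0 \<le> p - 2 * s * B + s^2 * B * q" "B \<ge> 0" "q \<ge> 0"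
  shows "B \<le> p * q"
proof (cases "q = 0")
  case True
  show ?thesis
  proof (rule ccontr)
    assume "\<not> B \<le> p * q"
    hence "B > 0" using True by simp
    have "0 \<le> p - 2 * ((p+1)/(2*B)) * B" using assms(1)[of "(p+1)/(2*B)"] True by simp
    also have "\<dots> = -1" using \<open>B > 0\<close> by (simp add: field_simps)
    finally show False by simp
  qed
next
  case False
  hence q: "q > 0" using assms by simp
  have "0 \<le> p - 2 * (1/q) * B + (1/q)^2 * B * q" by (rule assms(1))
  also have "\<dots> = p - B / q" using q by (simp add: field_simps power2_eq_square)
  finally show ?thesis using q by (simp add: field_simps)
qed

lemma psd_cs: assumes "psd A"
  shows "(cmod (sf A x y))^2 \<le> Re (sf A x x) * Re (sf A y y)"
proof -
  have h: "herm A" using assms by (rule psd_herm)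
  define b where "b = sf A x y"
  have byx: "sf A y x = cnj b" using herm_sf_cnj[OF h, of x y] by (simp add: b_def)
  have yy: "Im (sf A y y) = 0" using h by (rule herm_qf_real)
  have "0 \<le> Re (sf A x x) - 2 * s * (cmod b)^2 + s^2 * (cmod b)^2 * Re (sf A y y)" for s :: real
  proof -
    define l where "l = - (complex_of_real s * cnj b)"
    have e: "sf A (x + l *s y) (x + l *s y) = sf A x x + l * b + cnj l * cnj b + cnj l * l * sf A y y"
      by (simp add: sf_add1 sf_add2 sf_scale1 sf_scale2 byx b_def algebra_simps)
    have g: "Re (sf A (x + l *s y) (x + l *s y)) \<ge> 0" using assms by (simp add: psd_def2)
    have cb: "cnj b * b = complex_of_real ((cmod b)^2)" using complex_norm_square[of b] by (simp add: mult.commute)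
    have cb2: "b * cnj b = (complex_of_real (cmod b))^2" using complex_norm_square[of b] by simp
    have 1: "l * b = - (complex_of_real (s * (cmod b)^2))" 
      unfolding l_def by (simp add: cb flip: mult.assoc)
    have 2: "cnj l * cnj b = - (complex_of_real (s * (cmod b)^2))" 
      unfolding l_def by (simp add: mult.assoc cb cb2)
    have 3: "cnj l * l = complex_of_real (s^2 * (cmod b)^2)"
      unfolding l_def using cb2 by (simp add: power2_eq_square mult.assoc mult.left_commute[of b])
    have "Re (sf A x x + l * b + cnj l * cnj b + cnj l * l * sf A y y) = Re (sf A x x) - 2 * s * (cmod b)^2 + s^2 * (cmod b)^2 * Re (sf A y y)"
      unfolding 1 2 3 using yy by simp
    then show ?thesis using g e by simp
  qed
  moreover have "Re (sf A y y) \<ge> 0" using assms by (simp add: psd_def2)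
  ultimately show ?thesis unfolding b_def[symmetric] by (intro real_cs_aux) auto
qed

lemma adjoint_mult: "adjoint (A ** B) = adjoint B ** adjoint A"
  by (simp add: adjoint_def matrix_matrix_mult_def vec_eq_iff mult.commute)

lemma herm_adjoint: "herm A \<longleftrightarrow> adjoint A = A"
proof -
  have "adjoint A = A \<longleftrightarrow> (\<forall>i j. cnj (A$j$i) = A$i$j)" by (simp add: adjoint_def vec_eq_iff)
  also have "\<dots> \<longleftrightarrow> herm A" unfolding herm_def
  proof (intro iffI allI)
    fix i j assume h: "\<forall>i j. cnj (A$j$i) = A$i$j" show "A$i$j = cnj (A$j$i)" by (rule sym) (rule h[rule_format])
  next
    fix i j assume h: "\<forall>i j. A$i$j = cnj (A$j$i)" show "cnj (A$j$i) = A$i$j" by (rule sym) (rule h[rule_format])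
  qed
  finally show ?thesis by simp
qed

lemma sf_mv: "sf A x y = (\<Sum>i\<in>UNIV. cnj (x$i) * (A *v y)$i)"
  by (simp add: sf_def matrix_vector_mult_def sum_distrib_left mult.assoc)

lemma sum_swap3: "(\<Sum>i\<in>A. \<Sum>j\<in>B. \<Sum>m\<in>C. f i j m) = (\<Sum>m\<in>C. \<Sum>j\<in>B. \<Sum>i\<in>A. f i j m)"
proof -
  have "(\<Sum>i\<in>A. \<Sum>j\<in>B. \<Sum>m\<in>C. f i j m) = (\<Sum>j\<in>B. \<Sum>i\<in>A. \<Sum>m\<in>C. f i j m)" by (rule sum.swap)
  also have "\<dots> = (\<Sum>j\<in>B. \<Sum>m\<in>C. \<Sum>i\<in>A. f i j m)" by (intro sum.cong refl) (rule sum.swap)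
  also have "\<dots> = (\<Sum>m\<in>C. \<Sum>j\<in>B. \<Sum>i\<in>A. f i j m)" by (rule sum.swap)
  finally show ?thesis .
qed

lemma sf_mult: "sf (A ** B) x y = sf B (adjoint A *v x) y"
proof -
  have "sf (A ** B) x y = (\<Sum>i\<in>UNIV. \<Sum>j\<in>UNIV. \<Sum>m\<in>UNIV. cnj (x $ i) * A $ i $ m * B $ m $ j * y $ j)"
    by (simp add: sf_def matrix_matrix_mult_def sum_distrib_left sum_distrib_right mult.assoc)
  also have "\<dots> = (\<Sum>m\<in>UNIV. \<Sum>j\<in>UNIV. \<Sum>i\<in>UNIV. cnj (x $ i) * A $ i $ m * B $ m $ j * y $ j)"
    by (rule sum_swap3)
  also have "\<dots> = sf B (adjoint A *v x) y"
    by (simp add: sf_def matrix_vector_mult_def adjoint_def sum_distrib_left sum_distrib_right mult.assoc mult.left_commute)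
  finally show ?thesis .
qed

lemma sf_mult_herm: "herm A \<Longrightarrow> sf (A ** B) x y = sf B (A *v x) y"
  by (simp add: sf_mult herm_adjoint)

lemma sf_id: "sf (mat 1) x y = (\<Sum>i\<in>UNIV. cnj (x$i) * y$i)"
  by (simp add: sf_mv)

lemma n2_sf: "sf (mat 1) x x = complex_of_real (n2 x)"
  unfolding sf_id n2_def of_real_sum complex_norm_square by (simp add: mult.commute)

lemma psd_id: "psd (mat 1)"
  by (simp add: psd_def2 n2_sf n2_def sum_nonneg)

lemma cs_std: "(cmod (\<Sum>i\<in>UNIV. cnj (x$i) * y$i))^2 \<le> n2 x * n2 y"
  using psd_cs[OF psd_id, of x y] by (simp add: sf_id[symmetric] n2_sf)

lemma n2_nonneg: "n2 x \<ge> 0" by (simp add: n2_def sum_nonneg)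

lemma n2_zero: "n2 x = 0 \<Longrightarrow> x = 0"
  unfolding n2_def by (subst (asm) sum_nonneg_eq_0_iff) (auto simp: vec_eq_iff)

lemma sf_sq_herm: "herm A \<Longrightarrow> sf (A ** A) x x = complex_of_real (n2 (A *v x))"
proof -
  assume h: "herm A"
  have "sf (A ** A) x x = sf A (A *v x) x" using sf_mult_herm[OF h] by simp
  also have "\<dots> = sf (mat 1) (A *v x) (A *v x)" by (simp add: sf_mv)
  finally show ?thesis by (simp add: n2_sf)
qed

lemma mm_diff_l: "(A::'a::comm_ring_1^'n::finite^'n) ** (B - C) = A ** B - A ** C"
  by (simp add: matrix_matrix_mult_def vec_eq_iff sum_subtractf algebra_simps)
lemma mm_diff_r: "((A::'a::comm_ring_1^'n::finite^'n) - B) ** C = A ** C - B ** C"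
  by (simp add: matrix_matrix_mult_def vec_eq_iff sum_subtractf algebra_simps)
lemma mm_add_r: "((A::'a::comm_ring_1^'n::finite^'n) + B) ** C = A ** C + B ** C"
  by (simp add: matrix_matrix_mult_def vec_eq_iff sum.distrib algebra_simps)
lemma mm_add_l: "(A::'a::comm_ring_1^'n::finite^'n) ** (B + C) = A ** B + A ** C"
  by (simp add: matrix_matrix_mult_def vec_eq_iff sum.distrib algebra_simps)

lemma sf_mult_r: "sf (B ** W) y x = sf B y (W *v x)"
  by (simp add: sf_mv matrix_vector_mul_assoc)

lemma sf_zero_mat: "sf 0 x y = 0" by (simp add: sf_def)
lemma sf_add_mat: "sf (A + B) x y = sf A x y + sf B x y"
  by (simp add: sf_def sum.distrib algebra_simps)
lemma sf_diff_mat: "sf (A - B) x y = sf A x y - sf B x y"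
  by (simp add: sf_def sum_subtractf algebra_simps)

lemma mat_eq_mv: "(\<And>x. (A::complex^'n::finite^'n) *v x = 0) \<Longrightarrow> A = 0"
proof -
  assume h: "\<And>x. A *v x = 0"
  have "A $ i $ j = 0" for i j
  proof -
    have "(A *v axis j 1) $ i = A $ i $ j"
      by (simp add: matrix_vector_mult_def axis_def if_distrib[where f="\<lambda>u. _ * u"] cong: if_cong)
    then show ?thesis using h by simp
  qed
  then show ?thesis by (simp add: vec_eq_iff)
qed

lemma qf_zero_mat: assumes "\<And>x. sf A x x = 0" shows "A = 0"
proof -
  have "A $ i $ j = 0" for i j
  proof -
    have ex: "sf A (axis i 1 + axis j c) (axis i 1 + axis j c) = A$i$i + cnj c * A$j$j * c + c * A$i$j + cnj c * A$j$i" for c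
      by (simp add: sf_add1 sf_add2 sf_axis)
    have ii: "A$i$i = 0" using assms[of "axis i 1"] by (simp add: sf_axis)
    have jj: "A$j$j = 0" using assms[of "axis j 1"] by (simp add: sf_axis)
    have 1: "A$i$j + A$j$i = 0" using assms[of "axis i 1 + axis j 1"] ii jj unfolding ex by simp
    have 2: "\<i> * A$i$j - \<i> * A$j$i = 0" using assms[of "axis i 1 + axis j \<i>"] ii jj unfolding ex by simp
    from 1 2 show ?thesis by (simp add: algebra_simps)
  qed
  then show ?thesis by (simp add: vec_eq_iff)
qed

lemma herm_diff: "herm A \<Longrightarrow> herm B \<Longrightarrow> herm (A - B)"
  by (simp add: herm_adjoint adjoint_def vec_eq_iff)
lemma herm_add: "herm A \<Longrightarrow> herm B \<Longrightarrow> herm (A + B)"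
  by (simp add: herm_adjoint adjoint_def vec_eq_iff)
lemma herm_sq: "herm A \<Longrightarrow> herm (A ** A)"
  by (simp add: herm_adjoint adjoint_mult)

lemma herm_sq_zero: assumes "herm W" "W ** W = 0" shows "W = 0"
proof (rule mat_eq_mv)
  fix x
  have "complex_of_real (n2 (W *v x)) = 0" using sf_sq_herm[OF assms(1), of x] assms(2) by (simp add: sf_zero_mat)
  then show "W *v x = 0" by (intro n2_zero) simp
qed

lemma psd_sqrt_unique:
  assumes B: "psd B" and C: "psd C" and comm: "B ** C = C ** B" and sq: "B ** B = C ** C"
  shows "B = C"
proof -
  define W where "W = B - C"
  have hB: "herm B" using B by (rule psd_herm)
  have hC: "herm C" using C by (rule psd_herm)
  have hW: "herm W" unfolding W_def using hB hC by (rule herm_diff)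
  have BCW: "(B + C) ** W = 0" unfolding W_def mm_diff_l mm_add_r using comm sq by simp
  have P: "sf (W ** ((B + C) ** W)) x x = sf B (W *v x) (W *v x) + sf C (W *v x) (W *v x)" for x
    by (subst sf_mult_herm[OF hW]) (simp only: mm_add_r sf_add_mat sf_mult_r)
  have z: "sf B (W *v x) (W *v x) = 0 \<and> sf C (W *v x) (W *v x) = 0" for x
  proof -
    have s: "sf B (W *v x) (W *v x) + sf C (W *v x) (W *v x) = 0" using P[of x] BCW by (simp add: sf_zero_mat)
    have "Im (sf B (W *v x) (W *v x)) = 0" "Re (sf B (W *v x) (W *v x)) \<ge> 0"
         "Im (sf C (W *v x) (W *v x)) = 0" "Re (sf C (W *v x) (W *v x)) \<ge> 0"
      using B C by (auto simp: psd_def2)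
    with s show ?thesis by (simp add: complex_eq_iff)
  qed
  have P1: "W ** (B ** W) = 0"
    by (rule qf_zero_mat, subst sf_mult_herm[OF hW]) (simp only: sf_mult_r z)
  have P2: "W ** (C ** W) = 0"
    by (rule qf_zero_mat, subst sf_mult_herm[OF hW]) (simp only: sf_mult_r z)
  have W3: "W ** (W ** W) = 0"
  proof -
    have "W ** (W ** W) = W ** (B ** W) - W ** (C ** W)" unfolding W_def mm_diff_l mm_diff_r by simp
    then show ?thesis using P1 P2 by simp
  qed
  have "(W ** W) ** (W ** W) = 0"
  proof -
    have "(W ** W) ** (W ** W) = W ** (W ** (W ** W))" by (simp only: matrix_mul_assoc)
    also have "\<dots> = W ** 0" by (simp only: W3)
    also have "\<dots> = 0" by (simp add: matrix_matrix_mult_def vec_eq_iff zero_vec_def)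
    finally show ?thesis .
  qed
  then have "W ** W = 0" by (rule herm_sq_zero[OF herm_sq[OF hW]])
  then have "W = 0" by (rule herm_sq_zero[OF hW])
  then show ?thesis by (simp add: W_def)
qed

definition gco :: "nat \<Rightarrow> real" where "gco k = (-1)^k * ((1/2::real) gchoose k)"

lemma gco_0: "gco 0 = 1" by (simp add: gco_def)

lemma gco_rec: "gco (Suc k) = gco k * (real k - 1/2) / (real k + 1)"
proof -
  have "(1/2::real) * ((1/2) gchoose k) = real k * ((1/2) gchoose k) + real (Suc k) * ((1/2) gchoose (Suc k))"
    by (rule gbinomial_mult_1)
  hence e: "((1/2::real) gchoose (Suc k)) = (1/2 - real k) * ((1/2) gchoose k) / (real k + 1)"
    by (simp add: field_simps)
  have "gco (Suc k) = - ((-1)^k * ((1/2::real) gchoose (Suc k)))" by (simp add: gco_def)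
  also have "\<dots> = - ((-1)^k * ((1/2 - real k) * ((1/2) gchoose k) / (real k + 1)))" using e by simp
  also have "\<dots> = gco k * (real k - 1/2) / (real k + 1)" by (simp add: gco_def field_simps)
  finally show ?thesis .
qed

lemma gco_1: "gco (Suc 0) = -1/2" using gco_rec[of 0] by (simp add: gco_0)

lemma gco_neg: "k \<ge> 1 \<Longrightarrow> gco k \<le> 0"
proof (induction k)
  case 0 then show ?case by simp
next
  case (Suc k)
  show ?case
  proof (cases "k = 0")
    case True then show ?thesis by (simp add: gco_1)
  next
    case False
    then have "gco k \<le> 0" using Suc by simp
    moreover have "(real k - 1/2) / (real k + 1) \<ge> 0" using False by simp
    ultimately show ?thesis unfolding gco_rec by (metis mult_nonpos_nonneg times_divide_eq_right)
  qed
qed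

lemma gco_psum: "(\<Sum>k\<le>n. gco k) = (1 - 2 * real n) * gco n"
proof (induction n)
  case 0 then show ?case by (simp add: gco_0)
next
  case (Suc n)
  have "(\<Sum>k\<le>Suc n. gco k) = (1 - 2 * real n) * gco n + gco (Suc n)" using Suc by simp
  also have "(1 - 2 * real n) * gco n = - 2 * (real n + 1) * gco (Suc n)"
    unfolding gco_rec by (simp add: field_simps)
  finally show ?case by (simp add: algebra_simps)
qed

lemma gco_psum_nonneg: "(\<Sum>k\<le>n. gco k) \<ge> 0"
proof (cases "n = 0")
  case True then show ?thesis by (simp add: gco_0)
next
  case False
  then have "gco n \<le> 0" "1 - 2 * real n \<le> 0" using gco_neg[of n] by auto
  then show ?thesis unfolding gco_psum by (simp add: mult_nonpos_nonpos)
qed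

lemma gco_abs_psum: "(\<Sum>k<n. \<bar>gco k\<bar>) \<le> 2"
proof (cases n)
  case 0 then show ?thesis by simp
next
  case (Suc m)
  have "(\<Sum>k<n. \<bar>gco k\<bar>) = (\<Sum>k\<le>m. \<bar>gco k\<bar>)" using Suc by (simp add: lessThan_Suc_atMost)
  also have "\<dots> = (\<Sum>k\<le>m. (if k = 0 then 2 else 0) - gco k)"
  proof (intro sum.cong refl)
    fix k show "\<bar>gco k\<bar> = (if k = 0 then 2 else 0) - gco k"
    proof (cases "k = 0")
      case True then show ?thesis by (simp add: gco_0)
    next
      case False then have "gco k \<le> 0" by (intro gco_neg) simp
      then show ?thesis using False by simp
    qed
  qed
  also have "\<dots> = 2 - (\<Sum>k\<le>m. gco k)" by (simp add: sum_subtractf)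
  also have "\<dots> \<le> 2" using gco_psum_nonneg[of m] by simp
  finally show ?thesis .
qed

lemma gco_abs_summable: "summable (\<lambda>k. \<bar>gco k\<bar>)"
  by (rule summableI_nonneg_bounded[where x=2]) (auto simp: gco_abs_psum)

lemma gco_summable: "summable gco"
  using gco_abs_summable by (rule summable_rabs_cancel)

lemma gco_suminf_nonneg: "suminf gco \<ge> 0"
proof -
  have "(\<lambda>n. \<Sum>k<n. gco k) \<longlonglongrightarrow> suminf gco" using gco_summable by (rule summable_LIMSEQ)
  moreover have "(\<Sum>k<n. gco k) \<ge> 0" for n
    by (cases n) (simp_all add: lessThan_Suc_atMost gco_psum_nonneg)
  ultimately show ?thesis using LIMSEQ_le_const[of "\<lambda>n. \<Sum>k<n. gco k" "suminf gco" 0] by blast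
qed

lemma gco_conv: "(\<Sum>k\<le>n. gco k * gco (n - k)) = (if n = 0 then 1 else if n = 1 then -1 else 0)"
proof -
  have "(\<Sum>k\<le>n. gco k * gco (n - k)) = (-1)^n * (\<Sum>k=0..n. ((1/2::real) gchoose k) * ((1/2) gchoose (n - k)))"
    unfolding sum_distrib_left atMost_atLeast0[symmetric]
  proof (intro sum.cong refl)
    fix k assume "k \<in> {..n}"
    then have "(-1::real)^k * (-1)^(n-k) = (-1)^n" by (simp flip: power_add)
    then show "gco k * gco (n - k) = (-1)^n * (((1/2::real) gchoose k) * ((1/2) gchoose (n - k)))"
      unfolding gco_def by (metis (no_types, lifting) mult.assoc mult.left_commute)
  qed
  also have "\<dots> = (-1)^n * ((1::real) gchoose n)" by (simp add: gbinomial_Vandermonde)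
  also have "(1::real) gchoose n = real (1 choose n)" by (metis binomial_gbinomial of_nat_1)
  also have "real (1 choose n) = (if n = 0 then 1 else if n = 1 then 1 else 0)"
    by (cases n) (auto simp: binomial_eq_0)
  finally show ?thesis by auto
qed

lemma matpow_add: "matpow A (k + l) = matpow A k ** matpow A l"
  by (induction k) (simp_all add: matrix_mul_assoc)

lemma matpow_comm: "matpow A k ** A = A ** matpow A k"
proof -
  have "matpow A (k + 1) = matpow A k ** matpow A 1" by (rule matpow_add)
  then show ?thesis by simp
qed

lemma adjoint_id: "adjoint (mat 1 :: complex^'n::finite^'n) = mat 1"
  by (simp add: adjoint_def mat_def vec_eq_iff)

lemma herm_matpow: assumes "herm A" shows "herm (matpow A k)"
proof (induction k)
  case 0 then show ?case by (simp add: herm_adjoint adjoint_id)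
next
  case (Suc k)
  have "adjoint (matpow A (Suc k)) = matpow A k ** A"
    using Suc assms by (simp add: adjoint_mult herm_adjoint)
  then show ?case by (simp add: herm_adjoint matpow_comm)
qed

lemma comm_matpow: assumes "B ** A = A ** B" shows "B ** matpow A k = matpow A k ** B"
proof (induction k)
  case 0 then show ?case by simp
next
  case (Suc k)
  have "B ** matpow A (Suc k) = (B ** A) ** matpow A k" by (simp add: matrix_mul_assoc)
  also have "\<dots> = A ** (B ** matpow A k)" by (simp add: assms matrix_mul_assoc)
  also have "\<dots> = matpow A (Suc k) ** B" by (simp add: Suc matrix_mul_assoc)
  finally show ?case .
qed

definition contr :: "complex^'n::finite^'n \<Rightarrow> bool" where
  "contr H \<longleftrightarrow> (\<forall>x. n2 (H *v x) \<le> n2 x)"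

lemma contr_matpow: assumes "contr H" shows "n2 (matpow H k *v x) \<le> n2 x"
proof (induction k)
  case 0 then show ?case by simp
next
  case (Suc k)
  have "n2 (matpow H (Suc k) *v x) = n2 (H *v (matpow H k *v x))" by (simp add: matrix_vector_mul_assoc)
  also have "\<dots> \<le> n2 (matpow H k *v x)" using assms by (simp add: contr_def)
  finally show ?case using Suc by simp
qed

lemma n2_axis: "n2 (axis j (1::complex)) = 1"
  by (simp add: n2_def axis_def if_distrib[where f=cmod] if_distrib[where f="\<lambda>u. u^2"] cong: if_cong)

lemma comp_le_n2: "(cmod (x $ i))^2 \<le> n2 x"
  unfolding n2_def by (rule member_le_sum) auto

lemma mv_axis: "(A *v axis j 1) $ i = A $ i $ j"
  by (simp add: matrix_vector_mult_def axis_def if_distrib[where f="\<lambda>u. _ * u"] cong: if_cong)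

lemma contr_entry: assumes "contr H" shows "cmod (matpow H k $ i $ j) \<le> 1"
proof -
  have "(cmod (matpow H k $ i $ j))^2 \<le> 1"
    using comp_le_n2[of "matpow H k *v axis j 1" i] contr_matpow[OF assms, of k "axis j 1"]
    by (simp add: mv_axis n2_axis)
  then show ?thesis by (simp add: power_le_one_iff abs_le_square_iff[symmetric])
qed

lemma contr_qf: assumes "contr H" shows "cmod (sf (matpow H k) x x) \<le> n2 x"
proof -
  have "(cmod (sf (matpow H k) x x))^2 \<le> n2 x * n2 (matpow H k *v x)"
    using cs_std[of x "matpow H k *v x"] by (simp add: sf_mv)
  also have "\<dots> \<le> n2 x * n2 x" using contr_matpow[OF assms] n2_nonneg by (intro mult_left_mono) auto
  finally have "(cmod (sf (matpow H k) x x))^2 \<le> (n2 x)^2" by (simp add: power2_eq_square)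
  then show ?thesis using n2_nonneg by (rule power2_le_imp_le)
qed

definition sqS :: "complex^'n::finite^'n \<Rightarrow> complex^'n^'n" where
  "sqS H = (\<chi> i j. \<Sum>k. complex_of_real (gco k) * matpow H k $ i $ j)"

lemma sqS_sn: assumes "contr H"
  shows "summable (\<lambda>k. norm (complex_of_real (gco k) * matpow H k $ i $ j))"
proof (rule summable_comparison_test[OF _ gco_abs_summable])
  show "\<exists>N. \<forall>n\<ge>N. norm (norm (complex_of_real (gco n) * matpow H n $ i $ j)) \<le> \<bar>gco n\<bar>"
    using contr_entry[OF assms] by (auto simp: norm_mult intro!: mult_left_le)
qed

lemma sqS_s: "contr H \<Longrightarrow> summable (\<lambda>k. complex_of_real (gco k) * matpow H k $ i $ j)"
  by (rule summable_norm_cancel) (rule sqS_sn)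

lemma sqS_sq: assumes c: "contr H" shows "sqS H ** sqS H = mat 1 - H"
proof -
  have "(sqS H ** sqS H) $ i $ j = (mat 1 - H) $ i $ j" for i j
  proof -
    define a where "a = (\<lambda>m k. complex_of_real (gco k) * matpow H k $ i $ m)"
    define b where "b = (\<lambda>m k. complex_of_real (gco k) * matpow H k $ m $ j)"
    have "(sqS H ** sqS H) $ i $ j = (\<Sum>m\<in>UNIV. suminf (a m) * suminf (b m))"
      by (simp add: matrix_matrix_mult_def sqS_def a_def b_def)
    also have "\<dots> = (\<Sum>m\<in>UNIV. \<Sum>n. \<Sum>k\<le>n. a m k * b m (n - k))"
      by (intro sum.cong refl Cauchy_product) (simp_all add: a_def b_def sqS_sn[OF c])
    also have "\<dots> = (\<Sum>n. \<Sum>m\<in>UNIV. \<Sum>k\<le>n. a m k * b m (n - k))"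
    proof (rule suminf_sum[symmetric])
      fix m
      show "summable (\<lambda>n. \<Sum>k\<le>n. a m k * b m (n - k))"
        using Cauchy_product_sums[of "a m" "b m"] by (auto simp: a_def b_def sqS_sn[OF c] sums_summable)
    qed
    also have "\<dots> = (\<Sum>n. complex_of_real (if n = 0 then 1 else if n = 1 then -1 else 0) * matpow H n $ i $ j)"
    proof (intro suminf_cong)
      fix n
      have "(\<Sum>m\<in>UNIV. \<Sum>k\<le>n. a m k * b m (n - k))
          = (\<Sum>k\<le>n. complex_of_real (gco k * gco (n - k)) * (\<Sum>m\<in>UNIV. matpow H k $ i $ m * matpow H (n - k) $ m $ j))"
        by (subst sum.swap) (simp add: a_def b_def sum_distrib_left mult_ac)
      also have "\<dots> = (\<Sum>k\<le>n. complex_of_real (gco k * gco (n - k)) * matpow H n $ i $ j)"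
      proof (intro sum.cong refl)
        fix k assume "k \<in> {..n}"
        then have "matpow H k ** matpow H (n - k) = matpow H n" by (metis matpow_add le_add_diff_inverse atMost_iff)
        then show "complex_of_real (gco k * gco (n - k)) * (\<Sum>m\<in>UNIV. matpow H k $ i $ m * matpow H (n - k) $ m $ j)
             = complex_of_real (gco k * gco (n - k)) * matpow H n $ i $ j"
          by (simp flip: \<open>matpow H k ** matpow H (n - k) = matpow H n\<close> add: matrix_matrix_mult_def)
      qed
      also have "\<dots> = complex_of_real (\<Sum>k\<le>n. gco k * gco (n - k)) * matpow H n $ i $ j"
        by (simp add: sum_distrib_right)
      finally show "(\<Sum>m\<in>UNIV. \<Sum>k\<le>n. a m k * b m (n - k)) = complex_of_real (if n = 0 then 1 else if n = 1 then -1 else 0) * matpow H n $ i $ j"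
        by (simp add: gco_conv)
    qed
    also have "\<dots> = (\<Sum>n\<in>{0,1}. complex_of_real (if n = 0 then 1 else if n = 1 then -1 else 0) * matpow H n $ i $ j)"
      by (rule suminf_finite) auto
    also have "\<dots> = (mat 1 - H) $ i $ j" by simp
    finally show ?thesis .
  qed
  then show ?thesis by (simp add: vec_eq_iff)
qed

lemma lin_suminf:
  fixes f :: "'a \<Rightarrow> nat \<Rightarrow> complex"
  assumes "finite I" "\<And>m. summable (f m)"
  shows "(\<Sum>m\<in>I. c m * suminf (f m)) = (\<Sum>k. \<Sum>m\<in>I. c m * f m k)"
proof -
  have "(\<Sum>m\<in>I. c m * suminf (f m)) = (\<Sum>m\<in>I. \<Sum>k. c m * f m k)"
    by (intro sum.cong refl) (simp add: suminf_mult assms)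
  also have "\<dots> = (\<Sum>k. \<Sum>m\<in>I. c m * f m k)"
    by (rule suminf_sum[symmetric]) (simp add: summable_mult assms)
  finally show ?thesis .
qed

lemma lin_suminf2:
  fixes f :: "'a \<Rightarrow> 'b \<Rightarrow> nat \<Rightarrow> complex"
  assumes "finite I" "finite J" "\<And>i j. summable (f i j)"
  shows "(\<Sum>i\<in>I. \<Sum>j\<in>J. c i j * suminf (f i j)) = (\<Sum>k. \<Sum>i\<in>I. \<Sum>j\<in>J. c i j * f i j k)"
proof -
  have "(\<Sum>i\<in>I. \<Sum>j\<in>J. c i j * suminf (f i j)) = (\<Sum>i\<in>I. \<Sum>k. \<Sum>j\<in>J. c i j * f i j k)"
    by (intro sum.cong refl lin_suminf assms)
  also have "\<dots> = (\<Sum>k. \<Sum>i\<in>I. \<Sum>j\<in>J. c i j * f i j k)"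
    by (rule suminf_sum[symmetric]) (intro summable_sum summable_mult assms)
  finally show ?thesis .
qed

lemma sf_sqS: assumes "contr H"
  shows "sf (sqS H) x x = (\<Sum>k. complex_of_real (gco k) * sf (matpow H k) x x)"
proof -
  have "sf (sqS H) x x = (\<Sum>i\<in>UNIV. \<Sum>j\<in>UNIV. (cnj (x$i) * x$j) * (\<Sum>k. complex_of_real (gco k) * matpow H k $ i $ j))"
    by (simp add: sf_def sqS_def mult_ac)
  also have "\<dots> = (\<Sum>k. \<Sum>i\<in>UNIV. \<Sum>j\<in>UNIV. (cnj (x$i) * x$j) * (complex_of_real (gco k) * matpow H k $ i $ j))"
    by (rule lin_suminf2) (simp_all add: sqS_s[OF assms])
  also have "\<dots> = (\<Sum>k. complex_of_real (gco k) * sf (matpow H k) x x)"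
    by (simp add: sf_def sum_distrib_left mult_ac)
  finally show ?thesis .
qed

lemma psd_sqS: assumes h: "herm H" and c: "contr H" shows "psd (sqS H)"
  unfolding psd_def2
proof
  fix x
  define t where "t = (\<lambda>k. complex_of_real (gco k) * sf (matpow H k) x x)"
  have st: "summable t"
  proof (rule summable_norm_cancel, rule summable_comparison_test[OF _ summable_mult2[OF gco_abs_summable, of "n2 x"]])
    show "\<exists>N. \<forall>n\<ge>N. norm (norm (t n)) \<le> \<bar>gco n\<bar> * n2 x"
      using contr_qf[OF c] by (auto simp: t_def norm_mult intro!: mult_left_mono)
  qed
  have e: "sf (sqS H) x x = suminf t" unfolding t_def by (rule sf_sqS[OF c])
  have "Im (suminf t) = (\<Sum>k. Im (t k))" using st by (rule Im_suminf)
  also have "\<dots> = 0" using herm_qf_real[OF herm_matpow[OF h]] by (simp add: t_def)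
  finally have im: "Im (sf (sqS H) x x) = 0" using e by simp
  have "Re (suminf t) = (\<Sum>k. Re (t k))" using st by (rule Re_suminf)
  also have "\<dots> \<ge> (\<Sum>k. gco k * n2 x)"
  proof (rule suminf_le)
    fix k
    show "gco k * n2 x \<le> Re (t k)"
    proof (cases "k = 0")
      case True then show ?thesis by (simp add: t_def gco_0 n2_sf)
    next
      case False
      then have g: "gco k \<le> 0" by (intro gco_neg) simp
      have "Re (sf (matpow H k) x x) \<le> n2 x"
        using contr_qf[OF c, of k x] complex_Re_le_cmod[of "sf (matpow H k) x x"] by linarith
      then show ?thesis using g by (simp add: t_def mult_left_mono_neg)
    qed
  next
    show "summable (\<lambda>k. gco k * n2 x)" by (rule summable_mult2[OF gco_summable])
  next
    show "summable (\<lambda>k. Re (t k))" using st by (rule summable_Re)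
  qed
  finally have "Re (sf (sqS H) x x) \<ge> (\<Sum>k. gco k * n2 x)" using e by simp
  moreover have "(\<Sum>k. gco k * n2 x) = suminf gco * n2 x" by (rule suminf_mult2[OF gco_summable, symmetric])
  moreover have "suminf gco * n2 x \<ge> 0" using gco_suminf_nonneg n2_nonneg[of x] by (rule mult_nonneg_nonneg)
  ultimately show "Im (sf (sqS H) x x) = 0 \<and> 0 \<le> Re (sf (sqS H) x x)" using im by simp
qed

lemma comm_sqS: assumes c: "contr H" and bc: "B ** H = H ** B" shows "B ** sqS H = sqS H ** B"
proof -
  have "(B ** sqS H) $ i $ j = (sqS H ** B) $ i $ j" for i j
  proof -
    have "(B ** sqS H) $ i $ j = (\<Sum>m\<in>UNIV. B $ i $ m * (\<Sum>k. complex_of_real (gco k) * matpow H k $ m $ j))"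
      by (simp add: matrix_matrix_mult_def sqS_def)
    also have "\<dots> = (\<Sum>k. \<Sum>m\<in>UNIV. B $ i $ m * (complex_of_real (gco k) * matpow H k $ m $ j))"
      by (rule lin_suminf) (simp_all add: sqS_s[OF c])
    also have "\<dots> = (\<Sum>k. complex_of_real (gco k) * (B ** matpow H k) $ i $ j)"
      by (simp add: matrix_matrix_mult_def sum_distrib_left mult_ac)
    also have "\<dots> = (\<Sum>k. complex_of_real (gco k) * (matpow H k ** B) $ i $ j)"
      by (simp add: comm_matpow[OF bc])
    also have "\<dots> = (\<Sum>k. \<Sum>m\<in>UNIV. B $ m $ j * (complex_of_real (gco k) * matpow H k $ i $ m))"
      by (simp add: matrix_matrix_mult_def sum_distrib_left mult_ac)
    also have "\<dots> = (\<Sum>m\<in>UNIV. B $ m $ j * (\<Sum>k. complex_of_real (gco k) * matpow H k $ i $ m))"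
      by (rule lin_suminf[symmetric]) (simp_all add: sqS_s[OF c])
    also have "\<dots> = (sqS H ** B) $ i $ j"
      by (simp add: matrix_matrix_mult_def sqS_def mult_ac)
    finally show ?thesis .
  qed
  then show ?thesis by (simp add: vec_eq_iff)
qed

lemma scaleR_entry: "((r::real) *\<^sub>R (A::complex^'n::finite^'n)) $ i $ j = r *\<^sub>R (A $ i $ j)"
  by (simp only: vector_scaleR_component)

lemma sf_scaleR_mat: "sf (r *\<^sub>R A) x y = r *\<^sub>R sf A x y"
  by (simp add: sf_def scaleR_entry scaleR_sum_right)

lemma herm_scaleR: "herm A \<Longrightarrow> herm (r *\<^sub>R A)"
  by (simp add: herm_adjoint adjoint_def vec_eq_iff scaleR_entry)

lemma herm_id: "herm (mat 1 :: complex^'n::finite^'n)"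
  by (simp add: herm_adjoint adjoint_id)

lemma mm_scaleR: "(r *\<^sub>R A) ** (s *\<^sub>R B) = (r * s) *\<^sub>R (A ** (B::complex^'n::finite^'n))"
  by (simp add: matrix_matrix_mult_def vec_eq_iff scaleR_entry scaleR_sum_right mult.commute)

lemma mm_scaleR_l: "(r *\<^sub>R A) ** B = r *\<^sub>R (A ** (B::complex^'n::finite^'n))"
  by (simp add: matrix_matrix_mult_def vec_eq_iff scaleR_entry scaleR_sum_right)

lemma mm_scaleR_r: "A ** (r *\<^sub>R B) = r *\<^sub>R (A ** (B::complex^'n::finite^'n))"
  by (simp add: matrix_matrix_mult_def vec_eq_iff scaleR_entry scaleR_sum_right)

lemma prod_le_n2: "cmod (y $ i) * cmod (y $ j) \<le> n2 y"
proof -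
  have "(cmod (y $ i) * cmod (y $ j))^2 = (cmod (y $ i))^2 * (cmod (y $ j))^2" by (simp add: power_mult_distrib)
  also have "\<dots> \<le> n2 y * n2 y" using comp_le_n2[of y i] comp_le_n2[of y j] n2_nonneg[of y] by (intro mult_mono) auto
  finally have "(cmod (y $ i) * cmod (y $ j))^2 \<le> (n2 y)^2" by (simp add: power2_eq_square)
  then show ?thesis using n2_nonneg by (rule power2_le_imp_le)
qed

lemma qf_bound: "cmod (sf M y y) \<le> (\<Sum>i\<in>UNIV. \<Sum>j\<in>UNIV. cmod (M $ i $ j)) * n2 y"
proof -
  have "cmod (sf M y y) \<le> (\<Sum>i\<in>UNIV. cmod (\<Sum>j\<in>UNIV. cnj (y $ i) * M $ i $ j * y $ j))"
    unfolding sf_def by (rule norm_sum)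
  also have "\<dots> \<le> (\<Sum>i\<in>UNIV. \<Sum>j\<in>UNIV. cmod (cnj (y $ i) * M $ i $ j * y $ j))"
    by (intro sum_mono norm_sum)
  also have "\<dots> \<le> (\<Sum>i\<in>UNIV. \<Sum>j\<in>UNIV. cmod (M $ i $ j) * n2 y)"
  proof (intro sum_mono)
    fix i j
    have "cmod (cnj (y $ i) * M $ i $ j * y $ j) = cmod (M $ i $ j) * (cmod (y $ i) * cmod (y $ j))"
      by (simp add: norm_mult)
    also have "\<dots> \<le> cmod (M $ i $ j) * n2 y" by (intro mult_left_mono prod_le_n2) auto
    finally show "cmod (cnj (y $ i) * M $ i $ j * y $ j) \<le> cmod (M $ i $ j) * n2 y" .
  qed
  also have "\<dots> = (\<Sum>i\<in>UNIV. \<Sum>j\<in>UNIV. cmod (M $ i $ j)) * n2 y" by (simp add: sum_distrib_right)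
  finally show ?thesis .
qed

lemma msqrt_exists:
  assumes M: "psd M"
  shows "\<exists>R. psd R \<and> R ** R = M \<and> (\<forall>B. B ** M = M ** B \<longrightarrow> B ** R = R ** B)"
proof -
  define s where "s = (\<Sum>i\<in>UNIV. \<Sum>j\<in>UNIV. cmod (M $ i $ j))"
  define c where "c = 1 + s"
  have s0: "s \<ge> 0" unfolding s_def by (intro sum_nonneg) auto
  have c0: "c > 0" using s0 by (simp add: c_def)
  define H where "H = mat 1 - (1/c) *\<^sub>R M"
  have hM: "herm M" using M by (rule psd_herm)
  have hH: "herm H" unfolding H_def by (intro herm_diff herm_id herm_scaleR hM)
  have sfH: "sf H y y = complex_of_real (n2 y) - (1/c) *\<^sub>R sf M y y" for y
    by (simp add: H_def sf_diff_mat sf_scaleR_mat n2_sf)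
  have pH: "psd H" unfolding psd_def2
  proof
    fix y
    have ReM: "Re (sf M y y) \<le> s * n2 y" using qf_bound[of M y] complex_Re_le_cmod[of "sf M y y"] by (simp add: s_def)
    have "Re (sf H y y) = n2 y - Re (sf M y y) / c" by (simp add: sfH)
    moreover have "Re (sf M y y) / c \<le> n2 y"
    proof -
      have "Re (sf M y y) \<le> c * n2 y" using ReM n2_nonneg[of y] by (simp add: c_def algebra_simps)
      then show ?thesis using c0 by (simp add: divide_le_eq mult.commute)
    qed
    ultimately show "Im (sf H y y) = 0 \<and> 0 \<le> Re (sf H y y)" using herm_qf_real[OF hH] by simp
  qed
  have ReH: "Re (sf H y y) \<le> n2 y" for y
  proof -
    have "Re (sf M y y) \<ge> 0" using M by (simp add: psd_def2)
    then show ?thesis using c0 by (simp add: sfH)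
  qed
  have cH: "contr H" unfolding contr_def
  proof
    fix x
    define y where "y = H *v x"
    have "sf H y x = sf (mat 1) y y" by (simp add: sf_mv y_def)
    then have e: "sf H y x = complex_of_real (n2 y)" by (simp add: n2_sf)
    have "(n2 y)^2 \<le> Re (sf H y y) * Re (sf H x x)" using psd_cs[OF pH, of y x] by (simp add: e)
    also have "\<dots> \<le> n2 y * n2 x"
      using ReH[of y] ReH[of x] pH by (intro mult_mono) (auto simp: psd_def2 n2_nonneg)
    finally have "n2 y * n2 y \<le> n2 y * n2 x" by (simp add: power2_eq_square)
    then show "n2 (H *v x) \<le> n2 x" unfolding y_def[symmetric]
      using n2_nonneg[of y] by (cases "n2 y = 0") (auto simp: n2_nonneg)
  qed
  define R where "R = sqrt c *\<^sub>R sqS H"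
  have pR: "psd R"
    using psd_sqS[OF hH cH] c0 by (simp add: R_def psd_def2 sf_scaleR_mat)
  have RR: "R ** R = M"
  proof -
    have "R ** R = (sqrt c * sqrt c) *\<^sub>R (sqS H ** sqS H)" by (simp add: R_def mm_scaleR)
    also have "\<dots> = c *\<^sub>R (mat 1 - H)" using c0 by (simp add: sqS_sq[OF cH])
    also have "\<dots> = M" using c0 by (simp add: H_def)
    finally show ?thesis .
  qed
  have cR: "B ** R = R ** B" if "B ** M = M ** B" for B
  proof -
    have "B ** H = H ** B" using that
      by (simp add: H_def mm_diff_l mm_diff_r mm_scaleR_l mm_scaleR_r)
    then have "B ** sqS H = sqS H ** B" by (rule comm_sqS[OF cH])
    then show ?thesis by (simp add: R_def mm_scaleR_l mm_scaleR_r)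
  qed
  show ?thesis using pR RR cR by blast
qed

lemma msqrt_eq: assumes M: "psd M" and B: "psd B" and BB: "B ** B = M" shows "msqrt M = B"
proof -
  obtain R where R: "psd R" "R ** R = M" "\<And>B. B ** M = M ** B \<Longrightarrow> B ** R = R ** B"
    using msqrt_exists[OF M] by blast
  have uniq: "X = R" if X: "psd X" "X ** X = M" for X
  proof -
    have "X ** (X ** X) = (X ** X) ** X" by (rule matrix_mul_assoc)
    then have "X ** M = M ** X" by (simp only: X(2))
    then have "X ** R = R ** X" by (rule R(3))
    then show "X = R" by (rule psd_sqrt_unique[OF X(1) R(1)]) (simp only: X(2) R(2))
  qed
  have "msqrt M = R" unfolding msqrt_def
  proof (rule the_equality)
    show "psd R \<and> R ** R = M" using R(1,2) by simp
  next
    fix X assume "psd X \<and> X ** X = M" then show "X = R" using uniq by blast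
  qed
  moreover have "B = R" using uniq[OF B BB] .
  ultimately show ?thesis by simp
qed

lemma msqrt_props: assumes "psd M" shows "psd (msqrt M)" "msqrt M ** msqrt M = M"
proof -
  obtain R where R: "psd R" "R ** R = M" using msqrt_exists[OF assms] by blast
  have "msqrt M = R" by (rule msqrt_eq[OF assms R])
  then show "psd (msqrt M)" "msqrt M ** msqrt M = M" using R by simp_all
qed

lemma sf_id_axis: "sf (mat 1) (axis k 1) v = v $ k"
  by (simp add: sf_mv axis_def if_distrib[where f=cnj] if_distrib[where f="\<lambda>u. u * _"] cong: if_cong)

lemma pd_inverse:
  fixes A :: "complex^'n::finite^'n"
  assumes hA: "herm A" and e: "\<epsilon> > 0" and pd: "\<And>x. Re (sf A x x) \<ge> \<epsilon> * n2 x"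
  shows "\<exists>Y. A ** Y = mat 1 \<and> Y ** A = mat 1 \<and> psd Y \<and> (\<forall>k. Re (Y $ k $ k) \<le> 1 / \<epsilon>)"
proof -
  have inj: "\<forall>x. A *v x = 0 \<longrightarrow> x = 0"
  proof (intro allI impI)
    fix x assume "A *v x = 0"
    then have "sf A x x = 0" by (simp add: sf_mv)
    then have "\<epsilon> * n2 x \<le> 0" using pd[of x] by simp
    then have "n2 x \<le> 0" using e by (simp add: mult_le_0_iff)
    then show "x = 0" using n2_nonneg[of x] by (intro n2_zero) simp
  qed
  then obtain Y where YA: "Y ** A = mat 1" using matrix_left_invertible_ker[of A] by blast
  then have AY: "A ** Y = mat 1" using matrix_left_right_inverse by blast
  have hY: "herm Y"
  proof -
    have "adjoint Y ** A = mat 1" using arg_cong[OF AY, of adjoint] hA by (simp add: adjoint_mult herm_adjoint adjoint_id)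
    then have "adjoint Y = adjoint Y ** (A ** Y)" using AY by simp
    also have "\<dots> = Y" using \<open>adjoint Y ** A = mat 1\<close> by (simp add: matrix_mul_assoc)
    finally show ?thesis by (simp add: herm_adjoint)
  qed
  have sfY: "sf Y x x = sf A (Y *v x) (Y *v x)" for x
  proof -
    have "sf Y x x = sf (Y ** (A ** Y)) x x" using AY by simp
    also have "\<dots> = sf A (Y *v x) (Y *v x)" by (subst sf_mult_herm[OF hY]) (rule sf_mult_r)
    finally show ?thesis .
  qed
  have pA: "psd A" unfolding psd_def2 using herm_qf_real[OF hA] pd e n2_nonneg
    by (metis mult_nonneg_nonneg order_less_imp_le order_trans)
  have pY: "psd Y" unfolding psd_def2 sfY using pA by (simp add: psd_def2)
  have bd: "Re (Y $ k $ k) \<le> 1 / \<epsilon>" for k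
  proof -
    define w where "w = Y *v axis k 1"
    define t where "t = Re (Y $ k $ k)"
    have wk: "w $ k = Y $ k $ k" by (simp add: w_def mv_axis)
    have "t = Re (sf A w w)" using sfY[of "axis k 1"] by (simp add: t_def w_def sf_axis)
    also have "\<dots> \<ge> \<epsilon> * n2 w" by (rule pd)
    finally have 1: "\<epsilon> * n2 w \<le> t" .
    have "t^2 \<le> (cmod (w $ k))^2" unfolding t_def wk using abs_Re_le_cmod[of "Y $ k $ k"]
      by (simp add: abs_le_square_iff[symmetric])
    also have "\<dots> \<le> n2 w" by (rule comp_le_n2)
    finally have "\<epsilon> * t^2 \<le> t" using 1 e by (meson mult_left_mono order_trans less_imp_le)
    moreover have "t \<ge> 0" using 1 e n2_nonneg[of w] by (meson mult_nonneg_nonneg order_trans less_imp_le)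
    ultimately show ?thesis unfolding t_def[symmetric]
      using e by (cases "t = 0") (auto simp: power2_eq_square field_simps)
  qed
  show ?thesis using AY YA pY bd by blast
qed

lemma mtrace_add: "mtrace (A + B) = mtrace A + mtrace B"
  by (simp add: mtrace_def sum.distrib)
lemma mtrace_diff: "mtrace (A - B) = mtrace A - mtrace B"
  by (simp add: mtrace_def sum_subtractf)
lemma mtrace_scaleR: "mtrace (r *\<^sub>R A) = r *\<^sub>R mtrace A"
  by (simp add: mtrace_def scaleR_entry scaleR_sum_right)
lemma mtrace_id: "mtrace (mat 1 :: complex^'n::finite^'n) = of_nat CARD('n)"
  by (simp add: mtrace_def mat_def)

lemma core_ineq:
  fixes X M :: "complex^'n::finite^'n" and a :: "'n \<Rightarrow> complex^'n"
    and z f :: "'n \<Rightarrow> real" and r :: "'n \<Rightarrow> 'n \<Rightarrow> real"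
  assumes pX: "psd X" and XX: "X ** X = M"
    and Mdef: "\<And>k l. M $ k $ l = (\<Sum>j\<in>UNIV. complex_of_real (z j) * a j $ k * cnj (a j $ l))"
    and z0: "\<And>j. z j \<ge> 0" and r0: "\<And>j k. r j k \<ge> 0" and rs: "\<And>k. (\<Sum>j\<in>UNIV. z j * r j k) \<le> 1"
    and f0: "\<And>j. f j \<ge> 0" and fb: "\<And>j. z j > 0 \<Longrightarrow> f j \<le> (\<Sum>k\<in>UNIV. r j k * (cmod (a j $ k))^2)"
  shows "(\<Sum>j\<in>UNIV. z j * sqrt (f j)) \<le> Re (mtrace X)"
proof (rule field_le_epsilon)
  fix e :: real assume e0: "e > 0"
  define N where "N = real CARD('n)"
  have N0: "N > 0" by (simp add: N_def)
  define \<epsilon> where "\<epsilon> = 2 * e / N"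
  have eps: "\<epsilon> > 0" using e0 N0 by (simp add: \<epsilon>_def)
  define A where "A = X + \<epsilon> *\<^sub>R mat 1"
  have hX: "herm X" using pX by (rule psd_herm)
  have hA: "herm A" unfolding A_def by (intro herm_add hX herm_scaleR herm_id)
  have sfA: "sf A x x = sf X x x + \<epsilon> *\<^sub>R complex_of_real (n2 x)" for x
    by (simp add: A_def sf_add_mat sf_scaleR_mat n2_sf)
  have pdA: "Re (sf A x x) \<ge> \<epsilon> * n2 x" for x
    using pX by (simp add: sfA psd_def2)
  obtain Y where AY: "A ** Y = mat 1" and YA: "Y ** A = mat 1" and pY: "psd Y"
    and Ybd: "\<And>k. Re (Y $ k $ k) \<le> 1 / \<epsilon>"
    using pd_inverse[OF hA eps pdA] by blast
  have hY: "herm Y" using pY by (rule psd_herm)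
  have pA: "psd A" unfolding psd_def2 using herm_qf_real[OF hA] pdA eps n2_nonneg
    by (metis mult_nonneg_nonneg order_less_imp_le order_trans)
  define T where "T j = (\<Sum>k\<in>UNIV. r j k * Re (A $ k $ k))" for j
  define c where "c j = Re (sf Y (a j) (a j))" for j
  have Akk: "Re (A $ k $ k) \<ge> 0" for k
    using pA[unfolded psd_def2, rule_format, of "axis k 1"] by (simp add: sf_axis)
  have c0: "c j \<ge> 0" for j using pY by (simp add: c_def psd_def2)
  have T0: "T j \<ge> 0" for j unfolding T_def using r0 Akk by (intro sum_nonneg mult_nonneg_nonneg)
  have cs: "(cmod (v $ k))^2 \<le> Re (A $ k $ k) * Re (sf Y v v)" for v k
  proof -
    have 1: "sf Y (A *v axis k 1) v = v $ k"
    proof -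
      have "sf Y (A *v axis k 1) v = sf (A ** Y) (axis k 1) v" using sf_mult_herm[OF hA] by simp
      then show ?thesis using AY by (simp add: sf_id_axis)
    qed
    have 2: "sf Y (A *v axis k 1) (A *v axis k 1) = A $ k $ k"
    proof -
      have "sf Y (A *v axis k 1) (A *v axis k 1) = sf (A ** Y) (axis k 1) (A *v axis k 1)" using sf_mult_herm[OF hA] by simp
      then show ?thesis using AY by (simp add: sf_id_axis mv_axis)
    qed
    show ?thesis using psd_cs[OF pY, of "A *v axis k 1" v] by (simp add: 1 2 mult.commute)
  qed
  have perj: "z j * sqrt (f j) \<le> z j * ((T j + c j) / 2)" for j
  proof (cases "z j > 0")
    case False then show ?thesis using z0[of j] by simp
  next
    case True
    have "f j \<le> (\<Sum>k\<in>UNIV. r j k * (cmod (a j $ k))^2)" by (rule fb[OF True])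
    also have "\<dots> \<le> (\<Sum>k\<in>UNIV. r j k * (Re (A $ k $ k) * c j))"
      unfolding c_def using r0 cs by (intro sum_mono mult_left_mono) auto
    also have "\<dots> = T j * c j" by (simp add: T_def sum_distrib_right sum_distrib_left mult_ac)
    finally have "sqrt (f j) \<le> sqrt (T j * c j)" by simp
    also have "\<dots> \<le> (T j + c j) / 2" using T0 c0 by (rule arith_geo_mean_sqrt)
    finally show ?thesis using z0[of j] by (intro mult_left_mono) auto
  qed
  have sumT: "(\<Sum>j\<in>UNIV. z j * T j) \<le> Re (mtrace X) + \<epsilon> * N"
  proof -
    have "(\<Sum>j\<in>UNIV. z j * T j) = (\<Sum>k\<in>UNIV. (\<Sum>j\<in>UNIV. z j * r j k) * Re (A $ k $ k))"
      unfolding T_def by (simp add: sum_distrib_left sum_distrib_right mult_ac) (rule sum.swap)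
    also have "\<dots> \<le> (\<Sum>k\<in>UNIV. Re (A $ k $ k))"
      by (intro sum_mono mult_left_le_one_le Akk rs sum_nonneg mult_nonneg_nonneg z0 r0)
    also have "\<dots> = Re (mtrace A)" by (simp add: mtrace_def)
    also have "\<dots> = Re (mtrace X) + \<epsilon> * N"
      by (simp add: A_def mtrace_add mtrace_scaleR mtrace_id N_def)
    finally show ?thesis .
  qed
  have sumc: "(\<Sum>j\<in>UNIV. z j * c j) \<le> Re (mtrace X)"
  proof -
    have eq1: "(\<Sum>j\<in>UNIV. complex_of_real (z j) * sf Y (a j) (a j)) = mtrace (Y ** M)"
    proof -
      have "(\<Sum>j\<in>UNIV. complex_of_real (z j) * sf Y (a j) (a j))
          = (\<Sum>j\<in>UNIV. \<Sum>i\<in>UNIV. \<Sum>l\<in>UNIV. Y $ i $ l * (complex_of_real (z j) * a j $ l * cnj (a j $ i)))"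
        by (simp add: sf_def sum_distrib_left mult_ac)
      also have "\<dots> = (\<Sum>i\<in>UNIV. \<Sum>j\<in>UNIV. \<Sum>l\<in>UNIV. Y $ i $ l * (complex_of_real (z j) * a j $ l * cnj (a j $ i)))"
        by (rule sum.swap)
      also have "\<dots> = (\<Sum>i\<in>UNIV. \<Sum>l\<in>UNIV. \<Sum>j\<in>UNIV. Y $ i $ l * (complex_of_real (z j) * a j $ l * cnj (a j $ i)))"
        by (rule sum.cong[OF refl], rule sum.swap)
      also have "\<dots> = mtrace (Y ** M)"
        by (simp add: mtrace_def matrix_matrix_mult_def Mdef sum_distrib_left)
      finally show ?thesis .
    qed
    have eq2: "Y ** M = X - \<epsilon> *\<^sub>R mat 1 + (\<epsilon> * \<epsilon>) *\<^sub>R Y"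
    proof -
      have X: "X = A - \<epsilon> *\<^sub>R mat 1" by (simp add: A_def)
      have YX: "Y ** X = mat 1 - \<epsilon> *\<^sub>R Y" unfolding X mm_diff_l mm_scaleR_r using YA by simp
      have "Y ** M = (Y ** X) ** X" unfolding XX[symmetric] by (rule matrix_mul_assoc)
      also have "\<dots> = X - \<epsilon> *\<^sub>R (mat 1 - \<epsilon> *\<^sub>R Y)" unfolding YX mm_diff_r mm_scaleR_l YX by simp
      also have "\<dots> = X - \<epsilon> *\<^sub>R mat 1 + (\<epsilon> * \<epsilon>) *\<^sub>R Y" by (simp add: vec_eq_iff scaleR_entry algebra_simps)
      finally show ?thesis .
    qed
    have "(\<Sum>j\<in>UNIV. z j * c j) = Re (\<Sum>j\<in>UNIV. complex_of_real (z j) * sf Y (a j) (a j))"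
      by (simp add: c_def Re_sum)
    also have "\<dots> = Re (mtrace (X - \<epsilon> *\<^sub>R mat 1 + (\<epsilon> * \<epsilon>) *\<^sub>R Y))" by (simp only: eq1 eq2)
    also have "\<dots> = Re (mtrace X) - \<epsilon> * N + \<epsilon> * \<epsilon> * Re (mtrace Y)"
      by (simp add: mtrace_add mtrace_diff mtrace_scaleR mtrace_id N_def)
    also have "Re (mtrace Y) \<le> N / \<epsilon>"
    proof -
      have "Re (mtrace Y) = (\<Sum>k\<in>UNIV. Re (Y $ k $ k))" by (simp add: mtrace_def)
      also have "\<dots> \<le> (\<Sum>k\<in>(UNIV::'n set). 1 / \<epsilon>)" by (intro sum_mono Ybd)
      finally show ?thesis by (simp add: N_def)
    qed
    then have "\<epsilon> * \<epsilon> * Re (mtrace Y) \<le> \<epsilon> * \<epsilon> * (N / \<epsilon>)" using eps by (intro mult_left_mono) auto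
    then have "\<epsilon> * \<epsilon> * Re (mtrace Y) \<le> \<epsilon> * N" using eps by (simp add: field_simps)
    finally show ?thesis by simp
  qed
  have "(\<Sum>j\<in>UNIV. z j * sqrt (f j)) \<le> (\<Sum>j\<in>UNIV. z j * ((T j + c j) / 2))" by (intro sum_mono perj)
  also have "\<dots> = (\<Sum>j\<in>UNIV. (z j * T j + z j * c j) / 2)" by (intro sum.cong refl) (simp add: algebra_simps)
  also have "\<dots> = ((\<Sum>j\<in>UNIV. z j * T j) + (\<Sum>j\<in>UNIV. z j * c j)) / 2"
    by (simp only: sum_divide_distrib[symmetric] sum.distrib)
  also have "\<dots> \<le> (Re (mtrace X) + \<epsilon> * N + Re (mtrace X)) / 2" using sumT sumc by simp
  also have "\<dots> = Re (mtrace X) + e" using N0 by (simp add: \<epsilon>_def field_simps)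
  finally show "(\<Sum>j\<in>UNIV. z j * sqrt (f j)) \<le> Re (mtrace X) + e" .
qed

definition rs :: "real^'n::finite^'n \<Rightarrow> real" where
  "rs A = (\<Sum>i\<in>UNIV. \<Sum>j\<in>UNIV. \<bar>A $ i $ j\<bar>)"

lemma rs_nonneg: "rs A \<ge> 0" unfolding rs_def by (intro sum_nonneg) auto

lemma rpow_bound: "\<bar>matpow A k $ i $ j\<bar> \<le> rs A ^ k"
proof (induction k arbitrary: i j)
  case 0 then show ?case by (simp add: mat_def)
next
  case (Suc k)
  have "\<bar>matpow A (Suc k) $ i $ j\<bar> = \<bar>\<Sum>m\<in>UNIV. A $ i $ m * matpow A k $ m $ j\<bar>"
    by (simp add: matrix_matrix_mult_def)
  also have "\<dots> \<le> (\<Sum>m\<in>UNIV. \<bar>A $ i $ m\<bar> * rs A ^ k)"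
    by (rule order_trans[OF sum_abs]) (auto intro!: sum_mono mult_left_mono simp: abs_mult Suc)
  also have "\<dots> \<le> (\<Sum>i'\<in>UNIV. \<Sum>m\<in>UNIV. \<bar>A $ i' $ m\<bar> * rs A ^ k)"
    by (rule member_le_sum[of i]) (auto intro!: sum_nonneg mult_nonneg_nonneg zero_le_power rs_nonneg)
  also have "\<dots> = rs A ^ Suc k" by (simp add: rs_def sum_distrib_right)
  finally show ?case .
qed

lemma rpow_nonneg: assumes "\<And>i j. A $ i $ j \<ge> (0::real)" shows "matpow A k $ i $ j \<ge> 0"
proof (induction k arbitrary: i j)
  case 0 then show ?case by (simp add: mat_def)
next
  case (Suc k) then show ?case using assms by (simp add: matrix_matrix_mult_def sum_nonneg)
qed

lemma binom_aux:
  fixes a :: "nat \<Rightarrow> real" and c :: real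
  defines "\<beta> \<equiv> \<lambda>k m. real (k choose m) * c ^ (k - m)"
  shows "(\<Sum>m\<le>k. \<beta> k m * a (Suc m)) + (\<Sum>m\<le>k. c * \<beta> k m * a m) = (\<Sum>m\<le>Suc k. \<beta> (Suc k) m * a m)"
proof -
  have pas: "\<beta> (Suc k) (Suc m) = \<beta> k m + c * \<beta> k (Suc m)" if "m \<le> k" for m
  proof (cases "m = k")
    case True then show ?thesis by (simp add: \<beta>_def)
  next
    case False
    then have "k - m = Suc (k - Suc m)" using that by simp
    then show ?thesis by (simp add: \<beta>_def algebra_simps)
  qed
  have e1: "(\<Sum>m\<le>Suc k. \<beta> (Suc k) m * a m) = \<beta> (Suc k) 0 * a 0 + (\<Sum>m\<le>k. \<beta> (Suc k) (Suc m) * a (Suc m))"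
    by (rule sum.atMost_Suc_shift)
  have e2: "(\<Sum>m\<le>k. \<beta> (Suc k) (Suc m) * a (Suc m)) = (\<Sum>m\<le>k. \<beta> k m * a (Suc m)) + (\<Sum>m\<le>k. c * \<beta> k (Suc m) * a (Suc m))"
    unfolding sum.distrib[symmetric] by (intro sum.cong refl) (simp add: pas algebra_simps)
  have e3: "\<beta> (Suc k) 0 * a 0 = c * \<beta> k 0 * a 0" by (simp add: \<beta>_def)
  have e4: "c * \<beta> k 0 * a 0 + (\<Sum>m\<le>k. c * \<beta> k (Suc m) * a (Suc m)) = (\<Sum>m\<le>Suc k. c * \<beta> k m * a m)"
    by (rule sum.atMost_Suc_shift[symmetric])
  have e5: "(\<Sum>m\<le>Suc k. c * \<beta> k m * a m) = (\<Sum>m\<le>k. c * \<beta> k m * a m)" by (simp add: \<beta>_def)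
  show ?thesis using e1 e2 e3 e4 e5 by linarith
qed

lemma matpow_binom:
  fixes A :: "real^'n::finite^'n"
  shows "matpow (A + c *\<^sub>R mat 1) k $ i $ j = (\<Sum>m\<le>k. real (k choose m) * c ^ (k - m) * matpow A m $ i $ j)"
proof (induction k arbitrary: i j)
  case 0 then show ?case by simp
next
  case (Suc k)
  have "matpow (A + c *\<^sub>R mat 1) (Suc k) $ i $ j = (\<Sum>l\<in>UNIV. (A + c *\<^sub>R mat 1) $ i $ l * matpow (A + c *\<^sub>R mat 1) k $ l $ j)"
    by (simp add: matrix_matrix_mult_def)
  also have "\<dots> = (\<Sum>l\<in>UNIV. A $ i $ l * matpow (A + c *\<^sub>R mat 1) k $ l $ j) + c * matpow (A + c *\<^sub>R mat 1) k $ i $ j"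
    by (simp add: mat_def distrib_right sum.distrib mult.assoc if_distrib[where f="\<lambda>u. u * _"] if_distrib[where f="\<lambda>u. _ * u"] cong: if_cong)
  also have "(\<Sum>l\<in>UNIV. A $ i $ l * matpow (A + c *\<^sub>R mat 1) k $ l $ j) = (\<Sum>m\<le>k. real (k choose m) * c ^ (k - m) * matpow A (Suc m) $ i $ j)"
    by (simp add: Suc matrix_matrix_mult_def sum_distrib_left mult_ac) (rule sum.swap)
  also have "c * matpow (A + c *\<^sub>R mat 1) k $ i $ j = (\<Sum>m\<le>k. c * (real (k choose m) * c ^ (k - m)) * matpow A m $ i $ j)"
    by (simp add: Suc sum_distrib_left mult_ac)
  finally show ?case using binom_aux[of k c "\<lambda>m. matpow A m $ i $ j"] by simp
qed

lemma exp_series_nonneg: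
  fixes L :: "real^'n::finite^'n" and t d :: real
  assumes t0: "t \<ge> 0" and pos: "\<And>i j. (L + d *\<^sub>R mat 1) $ i $ j \<ge> 0"
  shows "summable (\<lambda>k. matpow (t *\<^sub>R L) k $ i $ j / fact k) \<and> (\<Sum>k. matpow (t *\<^sub>R L) k $ i $ j / fact k) \<ge> 0"
proof -
  define B where "B = t *\<^sub>R (L + d *\<^sub>R mat 1)"
  define c where "c = - t * d"
  have Bpos: "B $ i $ j \<ge> 0" for i j using pos t0 by (simp add: B_def)
  have tL: "t *\<^sub>R L = B + c *\<^sub>R mat 1" by (simp add: B_def c_def vec_eq_iff algebra_simps)
  define u where "u = (\<lambda>m. matpow B m $ i $ j / fact m)"
  define v where "v = (\<lambda>l. c ^ l / fact l)"
  have su: "summable (\<lambda>m. norm (u m))"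
  proof (rule summable_comparison_test[OF _ summable_exp[of "rs B"]])
    show "\<exists>N. \<forall>n\<ge>N. norm (norm (u n)) \<le> inverse (fact n) * rs B ^ n"
    proof (intro exI allI impI)
      fix n :: nat
      have "norm (norm (u n)) = inverse (fact n) * \<bar>matpow B n $ i $ j\<bar>"
        by (simp add: u_def abs_mult divide_inverse mult.commute)
      also have "\<dots> \<le> inverse (fact n) * rs B ^ n" by (intro mult_left_mono rpow_bound) simp
      finally show "norm (norm (u n)) \<le> inverse (fact n) * rs B ^ n" .
    qed
  qed
  have sv: "summable (\<lambda>l. norm (v l))"
  proof -
    have "norm (v l) = inverse (fact l) * \<bar>c\<bar> ^ l" for l
      by (simp add: v_def abs_mult power_abs divide_inverse mult.commute)
    then show ?thesis using summable_exp[of "\<bar>c\<bar>"] by simp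
  qed
  have conv: "(\<Sum>m\<le>k. u m * v (k - m)) = matpow (t *\<^sub>R L) k $ i $ j / fact k" for k
  proof -
    have "(\<Sum>m\<le>k. u m * v (k - m)) = (\<Sum>m\<le>k. real (k choose m) * c ^ (k - m) * matpow B m $ i $ j) / fact k"
      unfolding sum_divide_distrib
    proof (intro sum.cong refl)
      fix m assume "m \<in> {..k}"
      then have mk: "m \<le> k" by simp
      have "real (k choose m) = fact k / (fact m * fact (k - m))" using binomial_fact[OF mk] by simp
      then show "u m * v (k - m) = real (k choose m) * c ^ (k - m) * matpow B m $ i $ j / fact k"
        by (simp add: u_def v_def field_simps)
    qed
    also have "\<dots> = matpow (t *\<^sub>R L) k $ i $ j / fact k" by (simp add: tL matpow_binom)
    finally show ?thesis .
  qed
  have "(\<lambda>k. \<Sum>m\<le>k. u m * v (k - m)) sums (suminf u * suminf v)"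
    by (rule Cauchy_product_sums[OF su sv])
  then have S: "(\<lambda>k. matpow (t *\<^sub>R L) k $ i $ j / fact k) sums (suminf u * suminf v)" by (simp add: conv)
  have u0: "suminf u \<ge> 0"
    using su by (intro suminf_nonneg) (auto simp: u_def rpow_nonneg Bpos summable_norm_cancel)
  have "v sums exp c" using exp_converges[of c] by (simp add: v_def divide_inverse mult.commute)
  then have "suminf v = exp c" by (rule sums_unique[symmetric])
  then have v0: "suminf v > 0" by simp
  have "(\<Sum>k. matpow (t *\<^sub>R L) k $ i $ j / fact k) = suminf u * suminf v" using S by (rule sums_unique[symmetric])
  moreover have "suminf u * suminf v \<ge> 0" using u0 v0 by simp
  ultimately show ?thesis using S sums_summable by metis
qed

definition cmr :: "real^'n::finite^'n \<Rightarrow> complex^'n^'n" where "cmr = cmat_of_real"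

lemma cmat_mult: "cmat_of_real (A ** B) = cmat_of_real A ** cmat_of_real B"
  by (simp add: cmat_of_real_def matrix_matrix_mult_def vec_eq_iff of_real_sum)

lemma cmat_id: "cmat_of_real (mat 1) = (mat 1 :: complex^'n::finite^'n)"
  by (simp add: cmat_of_real_def mat_def vec_eq_iff)

lemma cmat_matpow: "matpow (cmat_of_real A) k = cmat_of_real (matpow A k)"
  by (induction k) (simp_all add: cmat_mult cmat_id)

lemma cmat_scaleR: "t *\<^sub>R cmat_of_real A = cmat_of_real (t *\<^sub>R A)"
  by (simp only: cmat_of_real_def vec_eq_iff vector_scaleR_component vec_lambda_beta) (simp add: scaleR_conv_of_real)

lemma mexp_real:
  assumes "summable (\<lambda>k. matpow A k $ i $ j / fact k)"
  shows "mexp (cmat_of_real A) $ i $ j = complex_of_real (\<Sum>k. matpow A k $ i $ j / fact k)"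
proof -
  have "mexp (cmat_of_real A) $ i $ j = (\<Sum>k. complex_of_real (matpow A k $ i $ j / fact k))"
    by (simp only: mexp_def cmat_matpow) (simp add: cmat_of_real_def)
  also have "\<dots> = complex_of_real (\<Sum>k. matpow A k $ i $ j / fact k)"
    by (rule suminf_of_real[OF assms, symmetric])
  finally show ?thesis .
qed

lemma degree_le: "degree E j \<le> CARD('n)" for E :: "'n::finite \<Rightarrow> 'n \<Rightarrow> bool"
  unfolding degree_def by (rule card_mono) auto

lemma ptrans_nonneg:
  fixes E :: "'n::finite \<Rightarrow> 'n \<Rightarrow> bool"
  assumes "t \<ge> 0"
  shows "\<exists>p. ptrans E t k j = complex_of_real p \<and> p \<ge> 0"
proof -
  define L where "L = laplacian E"
  define d where "d = real CARD('n)"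
  have pos: "(L + d *\<^sub>R mat 1) $ i $ l \<ge> 0" for i l
    using degree_le[of E i] by (auto simp: L_def d_def laplacian_def mat_def)
  from exp_series_nonneg[OF assms pos, of k j] have
    s: "summable (\<lambda>m. matpow (t *\<^sub>R L) m $ k $ j / fact m)" and n: "(\<Sum>m. matpow (t *\<^sub>R L) m $ k $ j / fact m) \<ge> 0" by auto
  have "ptrans E t k j = complex_of_real (\<Sum>m. matpow (t *\<^sub>R L) m $ k $ j / fact m)"
    unfolding ptrans_def cmat_scaleR L_def[symmetric] by (rule mexp_real[OF s])
  then show ?thesis using n by blast
qed

lemma csq: "(complex_of_real (cmod z))^2 = z * cnj z"
  using complex_norm_square[of z] by simp

lemma diag_entry: "diag_mat w $ i $ j = (if i = j then w i else 0)"
  by (simp add: diag_mat_def)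

lemma diag_mult_l: "(diag_mat w ** A) $ i $ j = w i * A $ i $ j"
  by (simp add: matrix_matrix_mult_def diag_mat_def if_distrib[where f="\<lambda>u. u * _"] cong: if_cong)

lemma diag_mult_r: "(A ** diag_mat w) $ i $ j = A $ i $ j * w j"
  by (simp add: matrix_matrix_mult_def diag_mat_def if_distrib[where f="\<lambda>u. _ * u"] cong: if_cong)

lemma diag_diag: "diag_mat w ** diag_mat w' = diag_mat (\<lambda>k. w k * w' k)"
  by (simp add: vec_eq_iff diag_mult_l diag_entry)

lemma psd_diag: assumes "\<And>k. r k \<ge> 0" shows "psd (diag_mat (\<lambda>k. complex_of_real (r k)))"
proof -
  have "sf (diag_mat (\<lambda>k. complex_of_real (r k))) x x = complex_of_real (\<Sum>k\<in>UNIV. r k * (cmod (x $ k))^2)" for x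
  proof -
    have "sf (diag_mat (\<lambda>k. complex_of_real (r k))) x x = (\<Sum>k\<in>UNIV. cnj (x $ k) * complex_of_real (r k) * x $ k)"
      by (simp add: sf_def diag_entry if_distrib[where f="\<lambda>u. _ * u"] if_distrib[where f="\<lambda>u. u * _"] cong: if_cong)
    also have "\<dots> = (\<Sum>k\<in>UNIV. complex_of_real (r k * (cmod (x $ k))^2))"
      by (intro sum.cong refl) (simp add: csq mult_ac)
    finally show ?thesis by (simp add: of_real_sum)
  qed
  then show ?thesis using assms by (simp add: psd_def2 sum_nonneg)
qed

lemma msqrt_diag: assumes "\<And>k. r k \<ge> 0"
  shows "msqrt (diag_mat (\<lambda>k. complex_of_real (r k))) = diag_mat (\<lambda>k. complex_of_real (sqrt (r k)))"
  by (rule msqrt_eq[OF psd_diag[OF assms] psd_diag]) (simp_all add: assms diag_diag flip: of_real_mult)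

definition gram :: "('n::finite \<Rightarrow> real) \<Rightarrow> ('n \<Rightarrow> complex^'n) \<Rightarrow> complex^'n^'n" where
  "gram z a = (\<chi> k l. \<Sum>j\<in>UNIV. complex_of_real (z j) * a j $ k * cnj (a j $ l))"

lemma psd_gram: assumes "\<And>j. z j \<ge> 0" shows "psd (gram z a)"
proof -
  have "sf (gram z a) x x = complex_of_real (\<Sum>j\<in>UNIV. z j * (cmod (\<Sum>k\<in>UNIV. cnj (x $ k) * a j $ k))^2)" for x
  proof -
    define w where "w j = (\<Sum>k\<in>UNIV. cnj (x $ k) * a j $ k)" for j
    have "sf (gram z a) x x = (\<Sum>k\<in>UNIV. \<Sum>l\<in>UNIV. \<Sum>j\<in>UNIV. complex_of_real (z j) * (cnj (x $ k) * a j $ k) * (cnj (a j $ l) * x $ l))"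
      by (simp add: sf_def gram_def sum_distrib_left sum_distrib_right mult_ac)
    also have "\<dots> = (\<Sum>j\<in>UNIV. \<Sum>l\<in>UNIV. \<Sum>k\<in>UNIV. complex_of_real (z j) * (cnj (x $ k) * a j $ k) * (cnj (a j $ l) * x $ l))"
      by (rule sum_swap3)
    also have "\<dots> = (\<Sum>j\<in>UNIV. complex_of_real (z j) * (w j * cnj (w j)))"
    proof (rule sum.cong[OF refl])
      fix j
      have "cnj (w j) = (\<Sum>l\<in>UNIV. cnj (a j $ l) * x $ l)" by (simp add: w_def mult.commute)
      then have "complex_of_real (z j) * (w j * cnj (w j)) = (\<Sum>k\<in>UNIV. \<Sum>l\<in>UNIV. complex_of_real (z j) * (cnj (x $ k) * a j $ k) * (cnj (a j $ l) * x $ l))"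
        by (simp add: w_def sum_product sum_distrib_left mult_ac)
      also have "\<dots> = (\<Sum>l\<in>UNIV. \<Sum>k\<in>UNIV. complex_of_real (z j) * (cnj (x $ k) * a j $ k) * (cnj (a j $ l) * x $ l))"
        by (rule sum.swap)
      finally show "(\<Sum>l\<in>UNIV. \<Sum>k\<in>UNIV. complex_of_real (z j) * (cnj (x $ k) * a j $ k) * (cnj (a j $ l) * x $ l)) = complex_of_real (z j) * (w j * cnj (w j))" by simp
    qed
    also have "\<dots> = complex_of_real (\<Sum>j\<in>UNIV. z j * (cmod (w j))^2)"
      by (simp add: of_real_sum csq)
    finally show ?thesis by (simp add: w_def)
  qed
  then show ?thesis using assms by (simp add: psd_def2 sum_nonneg)
qed

lemma gram_delta: "gram (\<lambda>j. if j = j0 then 1 else 0) a = (\<chi> k l. a j0 $ k * cnj (a j0 $ l))"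
  by (simp add: gram_def vec_eq_iff if_distrib[where f=complex_of_real] if_distrib[where f="\<lambda>u. u * _"] cong: if_cong)

lemma rank1_fid:
  fixes v :: "complex^'n::finite"
  defines "Om \<equiv> (\<chi> k l. v $ k * cnj (v $ l)) :: complex^'n^'n"
  shows "(Re (mtrace (msqrt Om)))^2 = n2 v"
proof -
  have pO: "psd Om"
    using psd_gram[of "\<lambda>j. if j = undefined then 1 else 0" "\<lambda>_. v"] by (simp add: gram_delta Om_def)
  have OO: "Om ** Om = n2 v *\<^sub>R Om"
  proof -
    have "(Om ** Om) $ k $ l = (n2 v *\<^sub>R Om) $ k $ l" for k l
    proof -
      have "(Om ** Om) $ k $ l = v $ k * cnj (v $ l) * (\<Sum>m\<in>UNIV. cnj (v $ m) * v $ m)"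
        by (simp add: Om_def matrix_matrix_mult_def sum_distrib_left mult_ac)
      also have "(\<Sum>m\<in>UNIV. cnj (v $ m) * v $ m) = complex_of_real (n2 v)"
        using n2_sf[of v] by (simp add: sf_id)
      finally show ?thesis by (simp add: Om_def scaleR_entry) (simp add: scaleR_conv_of_real mult_ac)
    qed
    then show ?thesis by (simp add: vec_eq_iff)
  qed
  have trO: "mtrace Om = complex_of_real (n2 v)"
    using n2_sf[of v] by (simp add: sf_id Om_def mtrace_def mult.commute)
  define X where "X = (1 / sqrt (n2 v)) *\<^sub>R Om"
  have pX: "psd X" using pO n2_nonneg[of v] by (simp add: X_def psd_def2 sf_scaleR_mat)
  have XX: "X ** X = Om"
  proof (cases "n2 v = 0")
    case True
    then have "v = 0" by (rule n2_zero)
    then show ?thesis using True by (simp add: X_def Om_def vec_eq_iff matrix_matrix_mult_def)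
  next
    case False
    then have n: "n2 v > 0" using n2_nonneg[of v] by simp
    have "X ** X = (1 / sqrt (n2 v) * (1 / sqrt (n2 v))) *\<^sub>R (Om ** Om)" by (simp add: X_def mm_scaleR)
    also have "\<dots> = Om" using n by (simp add: OO)
    finally show ?thesis .
  qed
  have "msqrt Om = X" by (rule msqrt_eq[OF pO pX XX])
  then have "Re (mtrace (msqrt Om)) = n2 v / sqrt (n2 v)" by (simp add: X_def mtrace_scaleR trO)
  then show ?thesis using n2_nonneg[of v]
    by (cases "n2 v = 0") (simp_all add: power_divide power2_eq_square)
qed

definition qU :: "('n::finite \<Rightarrow> 'n \<Rightarrow> bool) \<Rightarrow> real \<Rightarrow> complex^'n^'n" where
  "qU E t = mexp (\<chi> a b. \<i> * complex_of_real t * laplacian E $ a $ b)"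

definition pr :: "('n::finite \<Rightarrow> 'n \<Rightarrow> bool) \<Rightarrow> real \<Rightarrow> 'n \<Rightarrow> 'n \<Rightarrow> real" where
  "pr E t k j = Re (ptrans E t k j)"

lemma pr_props: assumes "t \<ge> 0" shows "ptrans E t k j = complex_of_real (pr E t k j)" "pr E t k j \<ge> 0"
  using ptrans_nonneg[OF assms, of E k j] by (auto simp: pr_def)

definition qv :: "('n::finite \<Rightarrow> 'n \<Rightarrow> bool) \<Rightarrow> real \<Rightarrow> ('n \<Rightarrow> real) \<Rightarrow> 'n \<Rightarrow> real" where
  "qv E t z k = (\<Sum>j\<in>UNIV. pr E t k j * z j)"

definition av :: "('n::finite \<Rightarrow> 'n \<Rightarrow> bool) \<Rightarrow> real \<Rightarrow> ('n \<Rightarrow> real) \<Rightarrow> 'n \<Rightarrow> complex^'n" where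
  "av E t z j = (\<chi> k. complex_of_real (sqrt (qv E t z k)) * qU E t $ k $ j)"

lemma qv_nonneg: "t \<ge> 0 \<Longrightarrow> (\<And>j. z j \<ge> 0) \<Longrightarrow> qv E t z k \<ge> 0"
  unfolding qv_def by (intro sum_nonneg mult_nonneg_nonneg pr_props) auto

lemma fid_formula:
  fixes E :: "'n::finite \<Rightarrow> 'n \<Rightarrow> bool" and z :: "'n \<Rightarrow> real"
  assumes t0: "t \<ge> 0" and z0: "\<And>j. z j \<ge> 0"
  shows "fidelity (classical_map E t (diag_mat (\<lambda>k. complex_of_real (z k)))) (quantum_map E t (diag_mat (\<lambda>k. complex_of_real (z k))))
       = (Re (mtrace (msqrt (gram z (av E t z)))))^2"
proof -
  define \<rho> where "\<rho> = diag_mat (\<lambda>k. complex_of_real (z k))"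
  define q where "q = qv E t z"
  define U where "U = qU E t"
  have q0: "q k \<ge> 0" for k unfolding q_def using qv_nonneg[OF t0 z0] .
  have cm: "classical_map E t \<rho> = diag_mat (\<lambda>k. complex_of_real (q k))"
  proof -
    have "(\<Sum>j\<in>UNIV. ptrans E t k j * \<rho> $ j $ j) = complex_of_real (q k)" for k
      by (simp add: \<rho>_def diag_entry pr_props[OF t0] q_def qv_def of_real_sum)
    then show ?thesis by (simp add: classical_map_def)
  qed
  have sq: "msqrt (classical_map E t \<rho>) = diag_mat (\<lambda>k. complex_of_real (sqrt (q k)))"
    unfolding cm by (rule msqrt_diag[OF q0])
  have qm: "quantum_map E t \<rho> = U ** \<rho> ** adjoint U"
    by (simp add: quantum_map_def U_def qU_def Let_def)
  have "msqrt (classical_map E t \<rho>) ** quantum_map E t \<rho> ** msqrt (classical_map E t \<rho>) = gram z (av E t z)"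
  proof -
    have "(diag_mat (\<lambda>k. complex_of_real (sqrt (q k))) ** (U ** \<rho> ** adjoint U) ** diag_mat (\<lambda>k. complex_of_real (sqrt (q k)))) $ k $ l
        = gram z (av E t z) $ k $ l" for k l
    proof -
      have "(U ** \<rho> ** adjoint U) $ k $ l = (\<Sum>j\<in>UNIV. U $ k $ j * complex_of_real (z j) * cnj (U $ l $ j))"
        by (subst matrix_matrix_mult_def) (simp add: adjoint_def \<rho>_def diag_mult_r)
      then show ?thesis
        by (simp add: diag_mult_l diag_mult_r gram_def av_def q_def U_def sum_distrib_left sum_distrib_right mult_ac)
    qed
    then show ?thesis unfolding sq qm by (simp add: vec_eq_iff)
  qed
  then show ?thesis unfolding fidelity_def \<rho>_def[symmetric] by simp
qed

definition fl :: "('n::finite \<Rightarrow> 'n \<Rightarrow> bool) \<Rightarrow> real \<Rightarrow> 'n \<Rightarrow> real" where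
  "fl E t j = (\<Sum>k\<in>UNIV. pr E t k j * (cmod (qU E t $ k $ j))^2)"

lemma fl_nonneg: "t \<ge> 0 \<Longrightarrow> fl E t j \<ge> 0"
  unfolding fl_def by (intro sum_nonneg mult_nonneg_nonneg pr_props) auto

lemma loc_as_diag: "loc_state j0 = diag_mat (\<lambda>k. complex_of_real (if k = j0 then 1 else 0))"
  unfolding loc_state_def by (intro arg_cong[where f=diag_mat]) auto

lemma loc_fid:
  fixes E :: "'n::finite \<Rightarrow> 'n \<Rightarrow> bool"
  assumes t0: "t \<ge> 0"
  shows "fidelity (classical_map E t (loc_state j0)) (quantum_map E t (loc_state j0)) = fl E t j0"
proof -
  define \<delta> where "\<delta> = (\<lambda>k::'n. if k = j0 then (1::real) else 0)"
  have d0: "\<delta> j \<ge> 0" for j by (simp add: \<delta>_def)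
  have "fidelity (classical_map E t (loc_state j0)) (quantum_map E t (loc_state j0))
      = (Re (mtrace (msqrt (gram \<delta> (av E t \<delta>)))))^2"
    using fid_formula[OF t0 d0, of E] by (simp add: loc_as_diag \<delta>_def)
  also have "gram \<delta> (av E t \<delta>) = (\<chi> k l. av E t \<delta> j0 $ k * cnj (av E t \<delta> j0 $ l))"
    unfolding \<delta>_def by (rule gram_delta)
  also have "(Re (mtrace (msqrt \<dots>)))^2 = n2 (av E t \<delta> j0)" by (rule rank1_fid)
  also have "\<dots> = fl E t j0"
  proof -
    have q: "qv E t \<delta> k = pr E t k j0" for k
      by (simp add: qv_def \<delta>_def if_distrib[where f="\<lambda>u. _ * u"] cong: if_cong)
    have "(cmod (av E t \<delta> j0 $ k))^2 = pr E t k j0 * (cmod (qU E t $ k $ j0))^2" for k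
      using pr_props(2)[OF t0, of E k j0] by (simp add: av_def q norm_mult power_mult_distrib)
    then show ?thesis by (simp add: n2_def fl_def)
  qed
  finally show ?thesis .
qed

lemma class_fid_ge:
  fixes E :: "'n::finite \<Rightarrow> 'n \<Rightarrow> bool" and z :: "'n \<Rightarrow> real"
  assumes t0: "t \<ge> 0" and z0: "\<And>j. z j \<ge> 0" and z1: "(\<Sum>j\<in>UNIV. z j) = 1"
  shows "Min (range (fl E t)) \<le> fidelity (classical_map E t (diag_mat (\<lambda>k. complex_of_real (z k)))) (quantum_map E t (diag_mat (\<lambda>k. complex_of_real (z k))))"
proof -
  define q where "q = qv E t z"
  define a where "a = av E t z"
  define X where "X = msqrt (gram z a)"
  define r where "r j k = (if q k > 0 then pr E t k j / q k else 0)" for j k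
  define m where "m = Min (range (fl E t))"
  have q0: "q k \<ge> 0" for k unfolding q_def using qv_nonneg[OF t0 z0] .
  have pg: "psd (gram z a)" by (rule psd_gram[OF z0])
  have pX: "psd X" and XX: "X ** X = gram z a" unfolding X_def using msqrt_props[OF pg] by auto
  have core: "(\<Sum>j\<in>UNIV. z j * sqrt (fl E t j)) \<le> Re (mtrace X)"
  proof (rule core_ineq[OF pX XX])
    show "gram z a $ k $ l = (\<Sum>j\<in>UNIV. complex_of_real (z j) * a j $ k * cnj (a j $ l))" for k l
      by (simp add: gram_def)
    show "z j \<ge> 0" for j by (rule z0)
    show "r j k \<ge> 0" for j k using q0[of k] pr_props(2)[OF t0, of E k j] by (simp add: r_def)
    show "(\<Sum>j\<in>UNIV. z j * r j k) \<le> 1" for k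
    proof (cases "q k > 0")
      case True
      have "(\<Sum>j\<in>UNIV. z j * r j k) = (\<Sum>j\<in>UNIV. pr E t k j * z j) / q k"
        using True by (simp add: r_def sum_divide_distrib mult_ac)
      also have "\<dots> = 1" using True by (simp add: q_def qv_def)
      finally show ?thesis by simp
    next
      case False then show ?thesis by (simp add: r_def)
    qed
    show "fl E t j \<ge> 0" for j by (rule fl_nonneg[OF t0])
    show "fl E t j \<le> (\<Sum>k\<in>UNIV. r j k * (cmod (a j $ k))^2)" if zj: "z j > 0" for j
      unfolding fl_def
    proof (rule sum_mono)
      fix k
      have ak: "(cmod (a j $ k))^2 = q k * (cmod (qU E t $ k $ j))^2"
        using q0[of k] by (simp add: a_def av_def q_def norm_mult power_mult_distrib)
      show "pr E t k j * (cmod (qU E t $ k $ j))^2 \<le> r j k * (cmod (a j $ k))^2"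
      proof (cases "q k > 0")
        case True then show ?thesis by (simp add: r_def ak)
      next
        case False
        then have "q k = 0" using q0[of k] by simp
        have "pr E t k j * z j \<le> q k" unfolding q_def qv_def
          by (rule member_le_sum) (auto intro!: mult_nonneg_nonneg pr_props(2)[OF t0] z0)
        then have "pr E t k j * z j \<le> 0" using \<open>q k = 0\<close> by simp
        then have "pr E t k j = 0" using zj pr_props(2)[OF t0, of E k j]
          by (simp add: mult_le_0_iff)
        then show ?thesis using False by (simp add: r_def)
      qed
    qed
  qed
  have mle: "m \<le> fl E t j" for j unfolding m_def by (rule Min_le) auto
  have m0: "m \<ge> 0" unfolding m_def using fl_nonneg[OF t0] by (subst Min_ge_iff) auto
  have "sqrt m = (\<Sum>j\<in>UNIV. z j * sqrt m)" by (simp add: sum_distrib_right[symmetric] z1)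
  also have "\<dots> \<le> (\<Sum>j\<in>UNIV. z j * sqrt (fl E t j))" using mle z0 by (intro sum_mono mult_left_mono) auto
  also have "\<dots> \<le> Re (mtrace X)" by (rule core)
  finally have "sqrt m \<le> Re (mtrace X)" .
  then have "(sqrt m)^2 \<le> (Re (mtrace X))^2" using m0 by (intro power_mono) auto
  then have "m \<le> (Re (mtrace X))^2" using m0 by simp
  then show ?thesis
    using fid_formula[OF t0 z0, of E] by (simp add: m_def X_def a_def)
qed

theorem theorem1:
  fixes E :: "'n::finite \<Rightarrow> 'n \<Rightarrow> bool" and t :: real
  assumes "simple_graph E" and "t \<ge> 0"
  shows "(\<exists>j. \<forall>\<rho>\<in>(classical_states :: (complex^'n^'n) set).
            fidelity (classical_map E t (loc_state j)) (quantum_map E t (loc_state j))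
            \<le> fidelity (classical_map E t \<rho>) (quantum_map E t \<rho>))
       \<and> (INF \<rho>\<in>(classical_states :: (complex^'n^'n) set).
            fidelity (classical_map E t \<rho>) (quantum_map E t \<rho>))
         = Min ((\<lambda>j. fidelity (classical_map E t (loc_state j)) (quantum_map E t (loc_state j))) ` UNIV)
       \<and> D_QC E t
         = Max ((\<lambda>j. 1 - fidelity (classical_map E t (loc_state j)) (quantum_map E t (loc_state j))) ` UNIV)"
proof -
  note t0 = assms(2)
  define Fr where "Fr = (\<lambda>\<rho>::complex^'n^'n. fidelity (classical_map E t \<rho>) (quantum_map E t \<rho>))"
  have locF: "Fr (loc_state j) = fl E t j" for j unfolding Fr_def by (rule loc_fid[OF t0])
  have "Min (range (fl E t)) \<in> range (fl E t)" by (rule Min_in) auto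
  then obtain j0 where j0: "fl E t j0 = Min (range (fl E t))" by (metis rangeE)
  have lb: "Fr (loc_state j0) \<le> Fr \<rho>" if "\<rho> \<in> classical_states" for \<rho>
  proof -
    from that obtain z where z: "\<rho> = diag_mat (\<lambda>k. complex_of_real (z k))" "\<And>k. z k \<ge> 0" "(\<Sum>k\<in>UNIV. z k) = 1"
      unfolding classical_states_def by blast
    have "Min (range (fl E t)) \<le> Fr \<rho>" unfolding z(1) Fr_def by (rule class_fid_ge[OF t0 z(2,3)])
    then show ?thesis using locF[of j0] j0 by simp
  qed
  have mem: "loc_state j \<in> (classical_states :: (complex^'n^'n) set)" for j
    unfolding classical_states_def loc_as_diag by (intro CollectI exI[of _ "\<lambda>k. if k = j then 1 else 0"]) simp
  have inf: "(INF \<rho>\<in>(classical_states :: (complex^'n^'n) set). Fr \<rho>) = Fr (loc_state j0)"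
  proof (rule cInf_eq_minimum)
    show "Fr (loc_state j0) \<in> Fr ` classical_states" using mem[of j0] by (rule imageI)
  next
    fix x assume "x \<in> Fr ` (classical_states :: (complex^'n^'n) set)"
    then obtain \<rho> where "\<rho> \<in> classical_states" "x = Fr \<rho>" by blast
    then show "Fr (loc_state j0) \<le> x" using lb by simp
  qed
  have mn: "Min ((\<lambda>j. Fr (loc_state j)) ` UNIV) = Fr (loc_state j0)"
  proof (rule Min_eqI)
    fix y assume "y \<in> (\<lambda>j. Fr (loc_state j)) ` UNIV"
    then obtain j where "y = Fr (loc_state j)" by blast
    then show "Fr (loc_state j0) \<le> y" using lb[OF mem[of j]] by simp
  qed auto
  have mx: "Max ((\<lambda>j. 1 - Fr (loc_state j)) ` UNIV) = 1 - Fr (loc_state j0)"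
  proof (rule Max_eqI)
    fix y assume "y \<in> (\<lambda>j. 1 - Fr (loc_state j)) ` UNIV"
    then obtain j where "y = 1 - Fr (loc_state j)" by blast
    then show "y \<le> 1 - Fr (loc_state j0)" using lb[OF mem[of j]] by simp
  qed auto
  have dq: "D_QC E t = 1 - Fr (loc_state j0)"
    unfolding D_QC_def using inf by (simp add: Fr_def)
  have ex: "\<forall>\<rho>\<in>(classical_states :: (complex^'n^'n) set). Fr (loc_state j0) \<le> Fr \<rho>" using lb by blast
  have e1: "\<exists>j. \<forall>\<rho>\<in>(classical_states :: (complex^'n^'n) set). Fr (loc_state j) \<le> Fr \<rho>" using ex by blast
  have e2: "(INF \<rho>\<in>(classical_states :: (complex^'n^'n) set). Fr \<rho>) = Min ((\<lambda>j. Fr (loc_state j)) ` UNIV)"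
    by (simp only: inf mn)
  have e3: "D_QC E t = Max ((\<lambda>j. 1 - Fr (loc_state j)) ` UNIV)" by (simp only: dq mx)
  show ?thesis using e1 e2 e3 unfolding Fr_def by (intro conjI)
qed

end
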